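(* Let $L\ge 2$ and $N_{\mathrm{em}}\ge 1$ be integers and $p_{\mathrm{src}}\in[0,1]$. Let $(\bm{v},N,m^N,u^N,x^N)$ be random variables as described in the context, satisfying conditions (A), (B) and (C) of the context. Let $\bm{\nu}=\{\nu_M: M\in\mathcal{M}\}$ be non-negative real constants with $\nu_M=0$ for all $M<Lp_{\mathrm{src}}$. Let $\bm{\xi}=\{\xi_{M,U}: (M,U)\in\mathcal{M}\times\mathcal{U},\ 0\le c(M,U)\le 1\}$ be real constants with $|\xi_{M,U}|\le 1$. Let $\eta_1,\delta_1\ge 0$ satisfy $$\max_{Q\in\mathcal{P}_{\mathcal{M}}:\ \mathbb{E}_{M\sim Q}[\nu_M]\ge \mathbb{E}_{M\sim\mathfrak{b}}[\nu_M]+\delta_1} 2^{-N_{\mathrm{em}}D(Q\|\mathfrak{b})}\le \eta_1,\qquad \mathfrak{b}:=\mathfrak{b}_{L,p_{\mathrm{src}}}.$$ Let $\eta_2\ge 0$ and non-negative numbers $\{\delta_2(N)\}_{N=1,2,\dots}$ satisfy $\exp[-N\delta_2(N)]\le\eta_2$ for all $N\ge1$. Let $H_{PA}(N)$ be a function of $N$ such that for every $N\ge 1$ $$\max_{P\in\mathcal{E}_N} H(X|Y)_{P_{\mathcal{X}\times\mathcal{Y}}}\le H_{PA}(N),$$ where $\mathcal{E}_N:=\mathcal{P}^{N,\bm{\nu},\delta_1}\cap\mathcal{P}^{\bm{\xi},\delta_2(N)}$ (sets defined in the context). Then there exist sets $T(N,y^N)\subseteq\{0,1\}^N$, defined for every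 $N\ge1$ and $y^N\in\mathcal{Y}^N$, such that $$\Pr\{N\ge 1,\ x^N\notin T(N,y^N)\}\le \eta_1+\eta_2,$$ where $y^N=(y_1,\dots,y_N)$ with $y_k:=f_{\mathcal{Y}}(m_k,u_k,x_k)$, and $$\log_2|T(N,y^N)|\le N H_{PA}(N)\quad\text{for all } N\ge1 \text{ and all } y^N\in\mathcal{Y}^N.$$
   Context: For a finite set $\Omega$, $\mathcal{P}_\Omega$ denotes the set of probability mass functions on $\Omega$; for $\omega^n=(\omega_1,\dots,\omega_n)\in\Omega^n$ the type $\tilde P_{\omega^n}\in\mathcal{P}_\Omega$ is $\tilde P_{\omega^n}(\omega)=\frac1n|\{i:\omega_i=\omega\}|$ (for several sequences, $\tilde P_{m^N,u^N,x^N}$ is the type of the sequence of triples $(m_k,u_k,x_k)$). Let $\mathcal{M}=\{0,\dots,L\}$, $\mathcal{U}=\mathcal{X}=\{0,1\}$, $\mathcal{Y}=\{(a,b): a\in\{0,\dots,L-2\},\ b\in\{0,1\}\}$, and $\mathcal{W}=\{(M,U,X)\in\mathcal{M}\times\mathcal{U}\times\mathcal{X}: 0\le M-U-X\le L-2\}$. Let $f_{\mathcal{Y}}(M,U,X):=(M-U-X,\ U\oplus X)$ with $\oplus$ addition mod 2. For $P\in\mathcal{P}_{\mathcal{W}}$, $P_{\mathcal{M}}$, $P_{\mathcal{M}\times\mathcal{U}}$, $P_{\mathcal{X}\times\mathcal{Y}}$ are the distributions of $M$, of $(M,U)$, and of $(X,f_{\mathcal{Y}}(M,U,X))$ when $(M,U,X)\sim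 P$; $H(X|Y)_{P_{\mathcal{X}\times\mathcal{Y}}}$ is the conditional Shannon entropy (base 2) under that joint distribution. $c(M,U):=(M-U)/(L-1)$. $\mathfrak{b}_{L,p}(M):=\binom{L}{M}p^M(1-p)^{L-M}$. $D(\cdot\|\cdot)$ is the Kullback–Leibler divergence (base 2). Random variables: on a common probability space (probability $\Pr$), $\bm{v}=(v_0,\dots,v_L)$ are non-negative integers with $\sum_M v_M=N_{\mathrm{em}}$, $N$ is a non-negative integer, and when $N\ge1$, $m^N\in\mathcal{M}^N$, $u^N\in\mathcal{U}^N$, $x^N\in\mathcal{X}^N$ with $(m_k,u_k,x_k)\in\mathcal{W}$ for all $k$. (A) There is $p_{\mathrm{odd}}\le p_{\mathrm{src}}$ with $\Pr\{\bm{v}\}=\frac{N_{\mathrm{em}}!}{\prod_{M=0}^L v_M!}\prod_{M=0}^L(\mathfrak{b}_{L,p_{\mathrm{odd}}}(M))^{v_M}$. (B) For all $M\in\mathcal{M}$, $\Pr\{N\tilde P_{m^N}(M)\le v_M\mid N\ge1\}=1$. (C) For $N\ge 1$, $\Pr\{x^N\mid N,m^N,u^N\}=\prod_{k=1}^N[c(m_k,u_k)]^{x_k}[1-c(m_k,u_k)]^{1-x_k}$. Sets: $\mathcal{P}^{N,\bm{\nu},\delta_1}:=\{P\in\mathcal{P}_{\mathcal{W}}: \mathbb{E}_{M\sim P_{\mathcal{M}}}[\nu_M]\le \frac{N_{\mathrm{em}}}{N}(\mathbb{E}_{M\sim\mathfrak{b}_{L,p_{\mathrm{src}}}}[\nu_M]+\delta_1)\}$,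 and $\mathcal{P}^{\bm{\xi},\delta_2}:=\{P\in\mathcal{P}_{\mathcal{W}}: \mathbb{E}_{(M,U,X)\sim P}[(X-c(M,U))\xi_{M,U}]\le \frac{\delta_2}{3}+[(\frac{\delta_2}{3})^2+2\delta_2\,\mathbb{E}_{(M,U)\sim P_{\mathcal{M}\times\mathcal{U}}}[c(M,U)(1-c(M,U))\xi_{M,U}^2]]^{1/2}\}$. *)

theory Defs
  imports "HOL-Probability.Probability"
begin

definition W_set :: "nat \<Rightarrow> (nat \<times> nat \<times> nat) set" where
  "W_set L = {(M, U, X). M \<le> L \<and> U \<le> 1 \<and> X \<le> 1 \<and> U + X \<le> M \<and> M - U - X \<le> L - 2}"

definition Y_set :: "nat \<Rightarrow> (nat \<times> nat) set" where
  "Y_set L = {(a, b). a \<le> L - 2 \<and> b \<le> 1}"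

text \<open>f_Y(M,U,X) = (M - U - X, U xor X) (subtraction is exact on W).\<close>
definition fY :: "nat \<times> nat \<times> nat \<Rightarrow> nat \<times> nat" where
  "fY w = (case w of (M, U, X) \<Rightarrow> (M - U - X, (U + X) mod 2))"

definition cMU :: "nat \<Rightarrow> nat \<Rightarrow> nat \<Rightarrow> real" where
  "cMU L M U = (real M - real U) / (real L - 1)"

definition binom_pmf :: "nat \<Rightarrow> real \<Rightarrow> nat \<Rightarrow> real" where
  "binom_pmf L p M = real (L choose M) * p ^ M * (1 - p) ^ (L - M)"

definition is_pmf_on :: "'b set \<Rightarrow> ('b \<Rightarrow> real) \<Rightarrow> bool" where
  "is_pmf_on S P \<longleftrightarrow> (\<forall>w. 0 \<le> P w) \<and> (\<forall>w. w \<notin> S \<longrightarrow> P w = 0) \<and> (\<Sum>w\<in>S. P w) = 1"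

definition marg_M :: "nat \<Rightarrow> (nat \<times> nat \<times> nat \<Rightarrow> real) \<Rightarrow> nat \<Rightarrow> real" where
  "marg_M L P M = (\<Sum>w\<in>{w \<in> W_set L. fst w = M}. P w)"

definition marg_MU :: "nat \<Rightarrow> (nat \<times> nat \<times> nat \<Rightarrow> real) \<Rightarrow> nat \<Rightarrow> nat \<Rightarrow> real" where
  "marg_MU L P M U = (\<Sum>w\<in>{w \<in> W_set L. fst w = M \<and> fst (snd w) = U}. P w)"

definition marg_XY :: "nat \<Rightarrow> (nat \<times> nat \<times> nat \<Rightarrow> real) \<Rightarrow> nat \<Rightarrow> nat \<times> nat \<Rightarrow> real" where
  "marg_XY L P X y = (\<Sum>w\<in>{w \<in> W_set L. snd (snd w) = X \<and> fY w = y}. P w)"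

definition marg_Y :: "nat \<Rightarrow> (nat \<times> nat \<times> nat \<Rightarrow> real) \<Rightarrow> nat \<times> nat \<Rightarrow> real" where
  "marg_Y L P y = (\<Sum>X\<in>{0,1}. marg_XY L P X y)"

definition cond_entropy_XY :: "nat \<Rightarrow> (nat \<times> nat \<times> nat \<Rightarrow> real) \<Rightarrow> real" where
  "cond_entropy_XY L P =
     (\<Sum>X\<in>{0::nat,1}. \<Sum>y\<in>Y_set L.
        (if marg_XY L P X y = 0 then 0
         else - marg_XY L P X y * log 2 (marg_XY L P X y / marg_Y L P y)))"

text \<open>KL divergence (base 2) of Q from B on {0..L}, for Q absolutely continuous w.r.t. B.\<close>
definition KL2 :: "nat \<Rightarrow> (nat \<Rightarrow> real) \<Rightarrow> (nat \<Rightarrow> real) \<Rightarrow> real" where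
  "KL2 L Q B = (\<Sum>M\<in>{0..L}. if Q M = 0 then 0 else Q M * log 2 (Q M / B M))"

definition Pset1 :: "nat \<Rightarrow> nat \<Rightarrow> real \<Rightarrow> nat \<Rightarrow> (nat \<Rightarrow> real) \<Rightarrow> real
                     \<Rightarrow> (nat \<times> nat \<times> nat \<Rightarrow> real) set" where
  "Pset1 L Nem psrc N nu \<delta>1 =
     {P. is_pmf_on (W_set L) P \<and>
         (\<Sum>M\<in>{0..L}. marg_M L P M * nu M)
           \<le> real Nem / real N * ((\<Sum>M\<in>{0..L}. binom_pmf L psrc M * nu M) + \<delta>1)}"

definition Pset2 :: "nat \<Rightarrow> (nat \<Rightarrow> nat \<Rightarrow> real) \<Rightarrow> real \<Rightarrow> (nat \<times> nat \<times> nat \<Rightarrow> real) set" where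
  "Pset2 L xi \<delta>2 =
     {P. is_pmf_on (W_set L) P \<and>
         (\<Sum>w\<in>W_set L. case w of (M, U, X) \<Rightarrow> P w * ((real X - cMU L M U) * xi M U))
           \<le> \<delta>2 / 3 + sqrt ((\<delta>2 / 3)\<^sup>2 + 2 * \<delta>2 *
               (\<Sum>(M, U)\<in>{0..L} \<times> {0..1}.
                  marg_MU L P M U * (cMU L M U * (1 - cMU L M U) * (xi M U)\<^sup>2)))}"

definition yseq :: "nat list \<Rightarrow> nat list \<Rightarrow> nat list \<Rightarrow> (nat \<times> nat) list" where
  "yseq ms us xs = map fY (zip ms (zip us xs))"

definition occ :: "nat list \<Rightarrow> nat \<Rightarrow> nat" where
  "occ ms M = length (filter (\<lambda>a. a = M) ms)"

end

theory Submission
  imports Defs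
begin
lemma fact_ge3: "2 * 3^k \<le> (fact (k+2) :: real)"
proof (induction k)
  case 0 then show ?case by simp
next
  case (Suc k)
  have f: "fact (Suc k + 2) = (real k + 3) * (fact (k+2) :: real)"
    using fact_Suc[of "k+2"] by (simp add: algebra_simps)
  have "(2::real) * 3^(Suc k) = 3 * (2 * 3^k)" by simp
  also have "\<dots> \<le> 3 * fact (k+2)" using Suc.IH by linarith
  also have "\<dots> \<le> (real k + 3) * fact (k+2)" by (intro mult_right_mono) auto
  finally have "(2::real) * 3^(Suc k) \<le> (real k + 3) * fact (k+2)" .
  then show ?case using f by argo
qed

lemma exp_bern:
  fixes z s :: real
  assumes z: "\<bar>z\<bar> \<le> 1" and s0: "0 \<le> s" and s3: "s < 3"
  shows "exp (s*z) \<le> 1 + s*z + z^2 * (s^2 / (2*(1 - s/3)))"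
proof -
  let ?f = "\<lambda>n. (s*z)^n / fact n"
  have e: "?f sums exp (s*z)" using exp_converges[of "s*z"]
    by (simp add: divide_inverse mult.commute)
  have "?f sums ((exp (s*z) - 1 - s*z) + (\<Sum>i<2. ?f i))"
    using e by (simp add: numeral_2_eq_2)
  then have e2: "(\<lambda>i. ?f (i+2)) sums (exp (s*z) - 1 - s*z)"
    using sums_iff_shift[of ?f 2] by blast
  have q: "norm (s/3) < 1" using s0 s3 by auto
  have g: "(\<lambda>i. z^2 * (s^2/2) * (s/3)^i) sums (z^2*(s^2/2) * (1/(1 - s/3)))"
    using sums_mult[OF geometric_sums[OF q], of "z^2 * (s^2/2)"] by simp
  have le: "?f (i+2) \<le> z^2*(s^2/2)*(s/3)^i" for i
  proof -
    have "?f (i+2) \<le> \<bar>s*z\<bar>^(i+2) / fact (i+2)"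
    proof (intro divide_right_mono)
      have "(s*z)^(i+2) \<le> \<bar>(s*z)^(i+2)\<bar>" by (rule abs_ge_self)
      also have "\<dots> = \<bar>s*z\<bar>^(i+2)" by (rule power_abs)
      finally show "(s*z)^(i+2) \<le> \<bar>s*z\<bar>^(i+2)" .
    qed simp
    also have "\<bar>s*z\<bar>^(i+2) = s^(i+2) * (z^2 * \<bar>z\<bar>^i)"
    proof -
      have "\<bar>s*z\<bar>^(i+2) = s^(i+2) * \<bar>z\<bar>^(i+2)" using s0 by (simp add: abs_mult power_mult_distrib)
      also have "\<bar>z\<bar>^(i+2) = z^2 * \<bar>z\<bar>^i" by (simp add: power_add power2_eq_square)
      finally show ?thesis .
    qed
    also have "\<dots> \<le> s^(i+2) * z^2"
    proof -
      have "\<bar>z\<bar>^i \<le> 1" using z by (simp add: power_le_one)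
      then have "z^2 * \<bar>z\<bar>^i \<le> z^2" by (simp add: mult_left_le)
      then show ?thesis using s0 by (simp add: mult_left_mono)
    qed
    also have "s^(i+2) * z^2 / fact (i+2) \<le> s^(i+2) * z^2 / (2*3^i)"
      using fact_ge3[of i] s0 by (intro divide_left_mono) auto
    also have "s^(i+2) * z^2 / (2*3^i) = z^2*(s^2/2)*(s/3)^i"
      by (simp add: power_add power_divide field_simps power2_eq_square)
    finally show ?thesis by (simp add: divide_right_mono)
  qed
  have "exp (s*z) - 1 - s*z \<le> z^2*(s^2/2) * (1/(1 - s/3))"
    using sums_le[OF le e2 g] .
  moreover have "z^2*(s^2/2) * (1/(1 - s/3)) = z^2 * (s^2 / (2*(1 - s/3)))"
    by simp
  ultimately show ?thesis by linarith
qed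

definition binlists :: "nat \<Rightarrow> nat list set" where
  "binlists n = {xs. length xs = n \<and> set xs \<subseteq> {0,1}}"

lemma binlists_Suc: "binlists (Suc n) = (\<lambda>(a,xs). a # xs) ` ({0,1} \<times> binlists n)"
proof (intro set_eqI iffI)
  fix ys assume "ys \<in> binlists (Suc n)"
  then obtain a xs where "ys = a # xs" "a \<in> {0,1}" "xs \<in> binlists n"
    unfolding binlists_def by (cases ys) auto
  then show "ys \<in> (\<lambda>(a,xs). a # xs) ` ({0,1} \<times> binlists n)" by force
qed (auto simp: binlists_def)

lemma binlists_nth: "xs \<in> binlists n \<Longrightarrow> k < n \<Longrightarrow> xs!k \<in> {0,1}"
  unfolding binlists_def using nth_mem by blast

lemma finite_binlists: "finite (binlists n)"
  by (induction n) (auto simp: binlists_Suc, simp add: binlists_def)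

lemma sum_prod_binlists:
  "(\<Sum>xs\<in>binlists n. \<Prod>k<n. f k (xs!k)) = (\<Prod>k<n. f k 0 + f k (1::nat) :: real)"
proof (induction n arbitrary: f)
  case 0
  have "binlists 0 = {[]}" by (auto simp: binlists_def)
  then show ?case by simp
next
  case (Suc n)
  have inj: "inj_on (\<lambda>(a,xs). a # xs) ({0::nat,1} \<times> binlists n)" by (auto simp: inj_on_def)
  have "(\<Sum>xs\<in>binlists (Suc n). \<Prod>k<Suc n. f k (xs!k))
      = (\<Sum>p\<in>{0::nat,1} \<times> binlists n. \<Prod>k<Suc n. f k ((fst p # snd p)!k))"
    unfolding binlists_Suc by (subst sum.reindex[OF inj]) (auto intro!: sum.cong simp: case_prod_beta)
  also have "\<dots> = (\<Sum>p\<in>{0::nat,1} \<times> binlists n. f 0 (fst p) * (\<Prod>k<n. f (Suc k) ((snd p)!k)))"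
    by (intro sum.cong refl) (simp only: prod.lessThan_Suc_shift nth_Cons_0 nth_Cons_Suc)
  also have "\<dots> = (\<Sum>a\<in>{0::nat,1}. \<Sum>xs\<in>binlists n. f 0 a * (\<Prod>k<n. f (Suc k) (xs!k)))"
    by (subst sum.cartesian_product) (simp add: case_prod_beta)
  also have "\<dots> = (\<Sum>a\<in>{0::nat,1}. f 0 a * (\<Prod>k<n. f (Suc k) 0 + f (Suc k) 1))"
    using Suc.IH[of "\<lambda>k. f (Suc k)"] by (simp add: sum_distrib_left[symmetric])
  also have "\<dots> = (\<Prod>k<Suc n. f k 0 + f k 1)"
    by (simp only: prod.lessThan_Suc_shift) (simp add: algebra_simps)
  finally show ?case .
qed

definition bern :: "real \<Rightarrow> nat \<Rightarrow> real" where
  "bern c a = c ^ a * (1 - c) ^ (1 - a)"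

lemma bern_simps[simp]: "bern c 0 = 1 - c" "bern c 1 = c" "bern c (Suc 0) = c"
  by (auto simp: bern_def)

lemma bernstein_aux:
  fixes c xi :: "nat \<Rightarrow> real" and n :: nat and a s :: real
  assumes cx: "\<forall>k<n. 0 \<le> c k \<and> c k \<le> 1 \<and> \<bar>xi k\<bar> \<le> 1"
    and s0: "0 \<le> s" and s3: "s < 3"
  shows "(\<Sum>xs\<in>{xs\<in>binlists n. (\<Sum>k<n. (real (xs!k) - c k) * xi k) > n * a}.
            \<Prod>k<n. bern (c k) (xs!k))
         \<le> exp (s^2 / (2*(1 - s/3)) * (\<Sum>k<n. c k * (1 - c k) * (xi k)^2) - s * n * a)"
proof -
  define \<psi> where "\<psi> = s^2 / (2*(1 - s/3))"
  have psi0: "\<psi> \<ge> 0" unfolding \<psi>_def using s3 by auto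
  define Z where "Z k x = (real x - c k) * xi k" for k x
  have bnn: "bern (c k) x \<ge> 0" if "k < n" "x \<in> {0,1}" for k x
    using cx that by auto
  have "(\<Sum>xs\<in>{xs\<in>binlists n. (\<Sum>k<n. Z k (xs!k)) > n * a}. \<Prod>k<n. bern (c k) (xs!k))
      \<le> (\<Sum>xs\<in>{xs\<in>binlists n. (\<Sum>k<n. Z k (xs!k)) > n * a}.
            (\<Prod>k<n. bern (c k) (xs!k)) * exp (s * ((\<Sum>k<n. Z k (xs!k)) - n * a)))"
  proof (intro sum_mono)
    fix xs assume "xs \<in> {xs\<in>binlists n. (\<Sum>k<n. Z k (xs!k)) > n * a}"
    then have xs: "xs \<in> binlists n" and gt: "(\<Sum>k<n. Z k (xs!k)) > n * a" by auto
    have "(\<Prod>k<n. bern (c k) (xs!k)) \<ge> 0"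
      using xs bnn binlists_nth by (intro prod_nonneg) auto
    moreover have "exp (s * ((\<Sum>k<n. Z k (xs!k)) - n * a)) \<ge> 1"
      using gt s0 by auto
    ultimately show "(\<Prod>k<n. bern (c k) (xs!k)) \<le>
       (\<Prod>k<n. bern (c k) (xs!k)) * exp (s * ((\<Sum>k<n. Z k (xs!k)) - n * a))"
      by (simp add: mult_le_cancel_left1)
  qed
  also have "\<dots> \<le> (\<Sum>xs\<in>binlists n.
            (\<Prod>k<n. bern (c k) (xs!k)) * exp (s * ((\<Sum>k<n. Z k (xs!k)) - n * a)))"
  proof (intro sum_mono2 finite_binlists)
    fix xs assume "xs \<in> binlists n - {xs\<in>binlists n. (\<Sum>k<n. Z k (xs!k)) > n * a}"
    then have xs: "xs \<in> binlists n" by auto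
    have "(\<Prod>k<n. bern (c k) (xs!k)) \<ge> 0"
      using xs bnn binlists_nth by (intro prod_nonneg) auto
    then show "0 \<le> (\<Prod>k<n. bern (c k) (xs!k)) * exp (s * ((\<Sum>k<n. Z k (xs!k)) - n * a))"
      by simp
  qed auto
  also have "\<dots> = exp (- s * n * a) * (\<Sum>xs\<in>binlists n. \<Prod>k<n. bern (c k) (xs!k) * exp (s * Z k (xs!k)))"
  proof -
    have "(\<Prod>k<n. bern (c k) (xs!k)) * exp (s * ((\<Sum>k<n. Z k (xs!k)) - n * a))
        = exp (- s * n * a) * (\<Prod>k<n. bern (c k) (xs!k) * exp (s * Z k (xs!k)))" for xs
    proof -
      have "s * ((\<Sum>k<n. Z k (xs!k)) - n * a) = (\<Sum>k<n. s * Z k (xs!k)) + (- s * n * a)"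
        by (simp add: sum_distrib_left algebra_simps)
      then have "exp (s * ((\<Sum>k<n. Z k (xs!k)) - n * a)) = (\<Prod>k<n. exp (s * Z k (xs!k))) * exp (- s * n * a)"
        by (simp add: exp_diff exp_sum exp_minus field_simps)
      then show ?thesis by (simp add: prod.distrib)
    qed
    then show ?thesis by (simp add: sum_distrib_left)
  qed
  also have "\<dots> = exp (- s * n * a) * (\<Prod>k<n. bern (c k) 0 * exp (s * Z k 0) + bern (c k) 1 * exp (s * Z k 1))"
    using sum_prod_binlists[of "\<lambda>k x. bern (c k) x * exp (s * Z k x)" n] by simp
  also have "\<dots> \<le> exp (- s * n * a) * (\<Prod>k<n. exp (c k * (1 - c k) * (xi k)^2 * \<psi>))"
  proof (intro mult_left_mono prod_mono conjI)
    fix k assume "k \<in> {..<n}"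
    then have ck: "0 \<le> c k" "c k \<le> 1" "\<bar>xi k\<bar> \<le> 1" using cx by auto
    have z0: "\<bar>- c k * xi k\<bar> \<le> 1" using ck by (auto simp: abs_mult intro: mult_le_one)
    have z1: "\<bar>(1 - c k) * xi k\<bar> \<le> 1" using ck by (auto simp: abs_mult intro: mult_le_one)
    have e0: "exp (s * Z k 0) \<le> 1 + s * (- c k * xi k) + (- c k * xi k)^2 * \<psi>"
      using exp_bern[OF z0 s0 s3] unfolding Z_def \<psi>_def by simp
    have e1: "exp (s * Z k 1) \<le> 1 + s * ((1 - c k) * xi k) + ((1 - c k) * xi k)^2 * \<psi>"
      using exp_bern[OF z1 s0 s3] unfolding Z_def \<psi>_def by simp
    have "bern (c k) 0 * exp (s * Z k 0) + bern (c k) 1 * exp (s * Z k 1)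
        \<le> (1 - c k) * (1 + s * (- c k * xi k) + (- c k * xi k)^2 * \<psi>)
          + c k * (1 + s * ((1 - c k) * xi k) + ((1 - c k) * xi k)^2 * \<psi>)"
      using ck e0 e1 by (intro add_mono) (simp_all add: mult_left_mono)
    also have "\<dots> = 1 + c k * (1 - c k) * (xi k)^2 * \<psi>"
      by (simp add: algebra_simps power2_eq_square)
    also have "\<dots> \<le> exp (c k * (1 - c k) * (xi k)^2 * \<psi>)"
      by (rule exp_ge_add_one_self[of "c k * (1 - c k) * (xi k)^2 * \<psi>", simplified add.commute])
    finally show "bern (c k) 0 * exp (s * Z k 0) + bern (c k) 1 * exp (s * Z k 1)
        \<le> exp (c k * (1 - c k) * (xi k)^2 * \<psi>)" .
    show "0 \<le> bern (c k) 0 * exp (s * Z k 0) + bern (c k) 1 * exp (s * Z k 1)"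
      using ck by simp
  qed simp
  also have "\<dots> = exp (\<psi> * (\<Sum>k<n. c k * (1 - c k) * (xi k)^2) - s * n * a)"
  proof -
    have "(\<Prod>k<n. exp (c k * (1 - c k) * (xi k)^2 * \<psi>)) = exp (\<Sum>k<n. c k * (1 - c k) * (xi k)^2 * \<psi>)"
      by (simp add: exp_sum)
    also have "(\<Sum>k<n. c k * (1 - c k) * (xi k)^2 * \<psi>) = \<psi> * (\<Sum>k<n. c k * (1 - c k) * (xi k)^2)"
      by (simp add: sum_distrib_left mult.commute)
    finally show ?thesis by (simp add: exp_add[symmetric])
  qed
  finally show ?thesis unfolding Z_def \<psi>_def .
qed

lemma bernstein:
  fixes c xi :: "nat \<Rightarrow> real" and n :: nat and \<delta> V thr :: real
  assumes cx: "\<forall>k<n. 0 \<le> c k \<and> c k \<le> 1 \<and> \<bar>xi k\<bar> \<le> 1"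
    and n1: "n \<ge> 1" and d0: "\<delta> \<ge> 0"
  defines "V \<equiv> (\<Sum>k<n. c k * (1 - c k) * (xi k)^2) / n"
  defines "thr \<equiv> \<delta>/3 + sqrt ((\<delta>/3)^2 + 2*\<delta>*V)"
  shows "(\<Sum>xs\<in>{xs\<in>binlists n. (\<Sum>k<n. (real (xs!k) - c k) * xi k) > n * thr}.
            \<Prod>k<n. bern (c k) (xs!k)) \<le> exp (- n * \<delta>)"
proof -
  let ?S = "\<Sum>k<n. c k * (1 - c k) * (xi k)^2"
  let ?L = "(\<Sum>xs\<in>{xs\<in>binlists n. (\<Sum>k<n. (real (xs!k) - c k) * xi k) > n * thr}.
            \<Prod>k<n. bern (c k) (xs!k))"
  have npos: "real n > 0" using n1 by simp
  have S0: "?S \<ge> 0" using cx by (intro sum_nonneg) auto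
  have V0: "V \<ge> 0" unfolding V_def using S0 by simp
  have SV: "?S = n * V" unfolding V_def using npos by simp
  have aux: "?L \<le> exp ((s::real)^2 / (2*(1 - s/3)) * (n * V) - s * n * thr)" if "0 \<le> s" "s < 3" for s :: real
    using bernstein_aux[of n c xi s thr] cx that SV by simp
  show ?thesis
  proof (cases "\<delta> = 0")
    case True
    then show ?thesis using aux[of 0] by simp
  next
    case False
    then have dpos: "\<delta> > 0" using d0 by simp
    have rad: "(\<delta>/3)^2 + 2*\<delta>*V \<ge> 0" using V0 d0 by simp
    have sq: "(sqrt ((\<delta>/3)^2 + 2*\<delta>*V))^2 = (\<delta>/3)^2 + 2*\<delta>*V"
      using rad by simp
    have "sqrt ((\<delta>/3)^2 + 2*\<delta>*V) \<ge> sqrt ((\<delta>/3)^2)"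
      using V0 d0 by (intro real_sqrt_le_mono) simp
    then have sqge: "sqrt ((\<delta>/3)^2 + 2*\<delta>*V) \<ge> \<delta>/3" using d0 by simp
    have apos: "thr > 0" unfolding thr_def using sqge dpos by simp
    have a2: "thr^2 = 2*\<delta>*(V + thr/3)"
    proof -
      have "thr - \<delta>/3 = sqrt ((\<delta>/3)^2 + 2*\<delta>*V)" unfolding thr_def by simp
      then have "(thr - \<delta>/3)^2 = (\<delta>/3)^2 + 2*\<delta>*V" using sq by simp
      then show ?thesis by (simp add: power2_eq_square algebra_simps)
    qed
    show ?thesis
    proof (cases "V = 0")
      case True
      then have "thr = 2*\<delta>/3" unfolding thr_def using d0 by simp
      then have e: "3 * real n * thr / 2 = n * \<delta>" by simp
      have "?L \<le> exp (- (3 * real n * thr / 2))" using aux[where s="3/2"] True by simp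
      then show ?thesis unfolding e by simp
    next
      case False
      then have Vpos: "V > 0" using V0 by simp
      define D where "D = V + thr/3"
      define s where "s = thr / D"
      have D: "D > 0" unfolding D_def using Vpos apos by simp
      have s0: "s \<ge> 0" unfolding s_def using D apos by simp
      have s3: "s < 3" unfolding s_def D_def using D Vpos apos by (simp add: field_simps)
      have om: "1 - s/3 = V / D" unfolding s_def D_def using D D_def by (simp add: field_simps)
      have psiV: "s^2 / (2*(1 - s/3)) * V = thr^2 / (2*D)"
        unfolding om unfolding s_def using D Vpos by (simp add: field_simps power2_eq_square)
      have sa: "s * thr = thr^2 / D" unfolding s_def using D by (simp add: power2_eq_square)
      have a2': "thr^2 = 2*\<delta>*D" unfolding D_def by (rule a2)
      have key: "s^2 / (2*(1 - s/3)) * V - s * thr = - \<delta>"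
        unfolding psiV sa a2' using D by (simp add: field_simps)
      have "s^2 / (2*(1 - s/3)) * (n * V) - s * n * thr = n * (s^2 / (2*(1 - s/3)) * V - s * thr)"
        by (simp add: algebra_simps)
      also have "\<dots> = - n * \<delta>" using key by simp
      finally show ?thesis using aux[OF s0 s3] by simp
    qed
  qed
qed

definition tp :: "nat list \<Rightarrow> nat list \<Rightarrow> nat list \<Rightarrow> nat \<times> nat \<times> nat \<Rightarrow> real" where
  "tp ms us xs w = real (card {k. k < length xs \<and> (ms!k, us!k, xs!k) = w}) / real (length xs)"

lemma W_subset: "W_set L \<subseteq> {0..L} \<times> {0..1} \<times> {0..1}"
  by (auto simp: W_set_def)

lemma finite_W: "finite (W_set L)"
  by (rule finite_subset[OF W_subset]) auto

lemma sum_count: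
  fixes f :: "'b \<Rightarrow> real" and n :: nat
  assumes "finite A" "\<forall>k<n. t k \<in> A"
  shows "(\<Sum>w\<in>A. real (card {k. k < n \<and> t k = w}) * f w) = (\<Sum>k<n. f (t k))"
proof -
  have c: "real (card {k. k < n \<and> t k = w}) = (\<Sum>k<n. if t k = w then 1 else 0)" for w
  proof -
    have "{k. k < n \<and> t k = w} = {k\<in>{..<n}. t k = w}" by auto
    moreover have "(\<Sum>k<n. if t k = w then 1 else 0 :: real) = (\<Sum>k\<in>{k\<in>{..<n}. t k = w}. 1)"
      using sum.inter_filter[of "{..<n}" "\<lambda>_. 1::real" "\<lambda>k. t k = w"] by simp
    ultimately show ?thesis by simp
  qed
  have "(\<Sum>w\<in>A. real (card {k. k < n \<and> t k = w}) * f w)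
      = (\<Sum>w\<in>A. \<Sum>k<n. (if t k = w then f w else 0))"
    unfolding c by (auto simp: sum_distrib_right intro!: sum.cong)
  also have "\<dots> = (\<Sum>k<n. \<Sum>w\<in>A. (if t k = w then f w else 0))"
    by (rule sum.swap)
  also have "\<dots> = (\<Sum>k<n. f (t k))"
    using assms by (intro sum.cong refl) (simp add: sum.delta' eq_commute)
  finally show ?thesis .
qed

lemma tp_sum:
  assumes "\<forall>k<length xs. (ms!k, us!k, xs!k) \<in> W_set L"
  shows "(\<Sum>w\<in>W_set L. tp ms us xs w * f w) = (\<Sum>k<length xs. f (ms!k, us!k, xs!k)) / length xs"
proof -
  have "(\<Sum>w\<in>W_set L. tp ms us xs w * f w)
     = (\<Sum>w\<in>W_set L. real (card {k. k < length xs \<and> (ms!k, us!k, xs!k) = w}) * f w) / length xs"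
    unfolding tp_def by (simp add: sum_divide_distrib)
  also have "\<dots> = (\<Sum>k<length xs. f (ms!k, us!k, xs!k)) / length xs"
    using sum_count[OF finite_W assms, of f] by simp
  finally show ?thesis .
qed

lemma tp_pmf:
  assumes "length xs \<ge> 1" "\<forall>k<length xs. (ms!k, us!k, xs!k) \<in> W_set L"
  shows "is_pmf_on (W_set L) (tp ms us xs)"
  unfolding is_pmf_on_def
proof (intro conjI allI impI)
  show "0 \<le> tp ms us xs w" for w by (simp add: tp_def)
  show "tp ms us xs w = 0" if "w \<notin> W_set L" for w
  proof -
    have "{k. k < length xs \<and> (ms!k, us!k, xs!k) = w} = {}" using assms(2) that by auto
    then show ?thesis by (simp add: tp_def)
  qed
  show "(\<Sum>w\<in>W_set L. tp ms us xs w) = 1"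
    using tp_sum[OF assms(2), of "\<lambda>_. 1"] assms(1) by (cases xs) auto
qed

lemma marg_M_sum:
  "(\<Sum>M\<in>{0..L}. marg_M L P M * h M) = (\<Sum>w\<in>W_set L. P w * h (fst w))"
proof -
  have "(\<Sum>M\<in>{0..L}. marg_M L P M * h M) = (\<Sum>M\<in>{0..L}. \<Sum>w\<in>W_set L. (if fst w = M then P w * h M else 0))"
    unfolding marg_M_def by (simp add: sum.inter_filter[OF finite_W, symmetric] sum_distrib_right)
  also have "\<dots> = (\<Sum>w\<in>W_set L. \<Sum>M\<in>{0..L}. (if fst w = M then P w * h M else 0))"
    by (rule sum.swap)
  also have "\<dots> = (\<Sum>w\<in>W_set L. P w * h (fst w))"
  proof (intro sum.cong refl)
    fix w assume "w \<in> W_set L"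
    then have "fst w \<in> {0..L}" by (auto simp: W_set_def)
    then show "(\<Sum>M\<in>{0..L}. (if fst w = M then P w * h M else 0)) = P w * h (fst w)"
      by (simp add: sum.delta)
  qed
  finally show ?thesis .
qed

lemma marg_MU_sum:
  "(\<Sum>(M, U)\<in>{0..L} \<times> {0..1}. marg_MU L P M U * g M U) = (\<Sum>w\<in>W_set L. P w * g (fst w) (fst (snd w)))"
proof -
  have "(\<Sum>(M, U)\<in>{0..L} \<times> {0..1}. marg_MU L P M U * g M U)
     = (\<Sum>p\<in>{0..L} \<times> {0..1}. \<Sum>w\<in>W_set L. (if (fst w, fst (snd w)) = p then P w * g (fst p) (snd p) else 0))"
    unfolding marg_MU_def
    by (intro sum.cong refl) (auto simp: sum.inter_filter[OF finite_W, symmetric] sum_distrib_right intro!: sum.cong)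
  also have "\<dots> = (\<Sum>w\<in>W_set L. \<Sum>p\<in>{0..L} \<times> {0..1}. (if (fst w, fst (snd w)) = p then P w * g (fst p) (snd p) else 0))"
    by (rule sum.swap)
  also have "\<dots> = (\<Sum>w\<in>W_set L. P w * g (fst w) (fst (snd w)))"
  proof (intro sum.cong refl)
    fix w assume "w \<in> W_set L"
    then have "(fst w, fst (snd w)) \<in> {0..L} \<times> {0..1}" by (auto simp: W_set_def)
    then show "(\<Sum>p\<in>{0..L} \<times> {0..1}. (if (fst w, fst (snd w)) = p then P w * g (fst p) (snd p) else 0))
        = P w * g (fst w) (fst (snd w))"
      by (simp add: sum.delta)
  qed
  finally show ?thesis .
qed

lemma marg_XY_sum: "marg_XY L P X y = (\<Sum>w\<in>W_set L. P w * (if snd (snd w) = X \<and> fY w = y then 1 else 0))"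
  unfolding marg_XY_def by (simp add: sum.inter_filter[OF finite_W, symmetric] if_distrib cong: if_cong)

lemma Pset2_lhs:
  "(\<Sum>w\<in>W_set L. case w of (M, U, X) \<Rightarrow> P w * ((real X - cMU L M U) * xi M U))
   = (\<Sum>w\<in>W_set L. P w * ((real (snd (snd w)) - cMU L (fst w) (fst (snd w))) * xi (fst w) (fst (snd w))))"
  by (intro sum.cong refl) (auto split: prod.splits)

lemma sqrt_avg:
  fixes a :: "'i \<Rightarrow> real"
  assumes "finite I" "I \<noteq> {}" "\<forall>i\<in>I. a i \<ge> 0"
  shows "(\<Sum>i\<in>I. sqrt (a i)) / card I \<le> sqrt ((\<Sum>i\<in>I. a i) / card I)"
proof -
  have cpos: "real (card I) > 0" using assms by auto
  have cs: "(\<Sum>i\<in>I. sqrt (a i) * 1)^2 \<le> (\<Sum>i\<in>I. (sqrt (a i))^2) * (\<Sum>i\<in>I. 1^2)"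
    by (rule Cauchy_Schwarz_ineq_sum)
  then have "(\<Sum>i\<in>I. sqrt (a i))^2 \<le> (\<Sum>i\<in>I. a i) * card I"
    using assms(3) by simp
  then have "((\<Sum>i\<in>I. sqrt (a i)) / card I)^2 \<le> (\<Sum>i\<in>I. a i) / card I"
    using cpos by (simp add: power_divide field_simps power2_eq_square)
  then show ?thesis by (rule real_le_rsqrt)
qed

definition avgP :: "'i set \<Rightarrow> ('i \<Rightarrow> nat \<times> nat \<times> nat \<Rightarrow> real) \<Rightarrow> nat \<times> nat \<times> nat \<Rightarrow> real" where
  "avgP I P w = (\<Sum>i\<in>I. P i w) / card I"

lemma avg_lin:
  "(\<Sum>w\<in>W_set L. avgP I P w * F w) = (\<Sum>i\<in>I. \<Sum>w\<in>W_set L. P i w * F w) / card I"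
proof -
  have "(\<Sum>w\<in>W_set L. avgP I P w * F w) = (\<Sum>w\<in>W_set L. (\<Sum>i\<in>I. P i w * F w)) / card I"
    unfolding avgP_def by (simp add: sum_divide_distrib sum_distrib_right)
  also have "\<dots> = (\<Sum>i\<in>I. \<Sum>w\<in>W_set L. P i w * F w) / card I"
    by (subst sum.swap) (rule refl)
  finally show ?thesis .
qed

lemma cMU_W:
  assumes "L \<ge> 2" "w \<in> W_set L"
  shows "0 \<le> cMU L (fst w) (fst (snd w)) \<and> cMU L (fst w) (fst (snd w)) \<le> 1"
proof -
  obtain M U X where w: "w = (M, U, X)" by (cases w) auto
  have h: "M \<le> L" "U \<le> 1" "X \<le> 1" "U + X \<le> M" "M - U - X \<le> L - 2"
    using assms(2) unfolding w W_set_def by auto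
  have "U \<le> M" "M - U \<le> L - 1" using h assms(1) by auto
  then have a: "real U \<le> real M" "real M - real U \<le> real L - 1" using assms(1) by auto
  have "real L - 1 > 0" using assms(1) by simp
  then show ?thesis using a unfolding w cMU_def by (simp add: field_simps)
qed

lemma fY_W: "w \<in> W_set L \<Longrightarrow> fY w \<in> Y_set L"
  by (auto simp: W_set_def Y_set_def fY_def split: prod.splits)

lemma avg_pmf:
  assumes "finite I" "I \<noteq> {}" "\<forall>i\<in>I. is_pmf_on (W_set L) (P i)"
  shows "is_pmf_on (W_set L) (avgP I P)"
  unfolding is_pmf_on_def
proof (intro conjI allI impI)
  have c: "real (card I) > 0" using assms by auto
  have nn: "\<forall>i\<in>I. \<forall>w. P i w \<ge> 0" using assms(3) unfolding is_pmf_on_def by blast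
  show "0 \<le> avgP I P w" for w
    unfolding avgP_def using nn c by (intro divide_nonneg_pos sum_nonneg) (blast, simp)
  show "avgP I P w = 0" if "w \<notin> W_set L" for w
  proof -
    have "\<forall>i\<in>I. P i w = 0" using assms(3) that unfolding is_pmf_on_def by blast
    then show ?thesis unfolding avgP_def by simp
  qed
  have "(\<Sum>w\<in>W_set L. avgP I P w) = (\<Sum>w\<in>W_set L. avgP I P w * 1)" by simp
  also have "\<dots> = (\<Sum>i\<in>I. \<Sum>w\<in>W_set L. P i w * 1) / card I" by (rule avg_lin)
  also have "\<dots> = (\<Sum>i\<in>I. 1) / card I"
    using assms(3) by (simp add: is_pmf_on_def)
  also have "\<dots> = 1" using c by simp
  finally show "(\<Sum>w\<in>W_set L. avgP I P w) = 1" .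
qed

lemma avg_Pset1:
  assumes "finite I" "I \<noteq> {}" "\<forall>i\<in>I. P i \<in> Pset1 L Nem psrc N nu \<delta>1"
  shows "avgP I P \<in> Pset1 L Nem psrc N nu \<delta>1"
proof -
  let ?B = "real Nem / real N * ((\<Sum>M\<in>{0..L}. binom_pmf L psrc M * nu M) + \<delta>1)"
  have c: "real (card I) > 0" using assms by auto
  have pm: "is_pmf_on (W_set L) (avgP I P)"
    using assms by (intro avg_pmf) (auto simp: Pset1_def)
  have "(\<Sum>M\<in>{0..L}. marg_M L (avgP I P) M * nu M) = (\<Sum>w\<in>W_set L. avgP I P w * nu (fst w))"
    by (rule marg_M_sum)
  also have "\<dots> = (\<Sum>i\<in>I. \<Sum>w\<in>W_set L. P i w * nu (fst w)) / card I" by (rule avg_lin)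
  also have "\<dots> \<le> (\<Sum>i\<in>I. ?B) / card I"
  proof (intro divide_right_mono sum_mono)
    fix i assume "i \<in> I"
    then have "(\<Sum>M\<in>{0..L}. marg_M L (P i) M * nu M) \<le> ?B" using assms(3) by (auto simp: Pset1_def)
    then show "(\<Sum>w\<in>W_set L. P i w * nu (fst w)) \<le> ?B" by (simp add: marg_M_sum)
  qed simp
  also have "\<dots> = ?B" using c by simp
  finally show ?thesis using pm by (simp add: Pset1_def)
qed

lemma avg_Pset2:
  assumes L2: "L \<ge> 2" and "finite I" "I \<noteq> {}" "\<forall>i\<in>I. P i \<in> Pset2 L xi \<delta>" and d0: "\<delta> \<ge> 0"
  shows "avgP I P \<in> Pset2 L xi \<delta>"
proof -
  define F where "F w = (real (snd (snd w)) - cMU L (fst w) (fst (snd w))) * xi (fst w) (fst (snd w))" for w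
  define G where "G w = cMU L (fst w) (fst (snd w)) * (1 - cMU L (fst w) (fst (snd w))) * (xi (fst w) (fst (snd w)))\<^sup>2" for w :: "nat \<times> nat \<times> nat"
  define S where "S Q = (\<Sum>w\<in>W_set L. Q w * G w)" for Q :: "nat \<times> nat \<times> nat \<Rightarrow> real"
  have c: "real (card I) > 0" using assms by auto
  have pmi: "\<forall>i\<in>I. is_pmf_on (W_set L) (P i)" using assms(4) by (auto simp: Pset2_def)
  have pm: "is_pmf_on (W_set L) (avgP I P)"
    using assms pmi by (intro avg_pmf) auto
  have Seq: "(\<Sum>(M, U)\<in>{0..L} \<times> {0..1}. marg_MU L Q M U * (cMU L M U * (1 - cMU L M U) * (xi M U)\<^sup>2)) = S Q" for Q
    unfolding S_def G_def by (rule marg_MU_sum)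
  have lhs: "(\<Sum>w\<in>W_set L. case w of (M, U, X) \<Rightarrow> Q w * ((real X - cMU L M U) * xi M U))
      = (\<Sum>w\<in>W_set L. Q w * F w)" for Q
    unfolding F_def by (rule Pset2_lhs)
  have S0: "S (P i) \<ge> 0" if "i \<in> I" for i
    unfolding S_def G_def
  proof (intro sum_nonneg mult_nonneg_nonneg)
    fix w assume "w \<in> W_set L"
    then show "0 \<le> cMU L (fst w) (fst (snd w))" "0 \<le> 1 - cMU L (fst w) (fst (snd w))"
      using cMU_W[OF L2] by auto
    show "0 \<le> P i w" using pmi that unfolding is_pmf_on_def by blast
  qed simp
  have Savg: "S (avgP I P) = (\<Sum>i\<in>I. S (P i)) / card I" unfolding S_def by (rule avg_lin)
  have "(\<Sum>w\<in>W_set L. avgP I P w * F w) = (\<Sum>i\<in>I. \<Sum>w\<in>W_set L. P i w * F w) / card I"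
    by (rule avg_lin)
  also have "\<dots> \<le> (\<Sum>i\<in>I. \<delta>/3 + sqrt ((\<delta>/3)\<^sup>2 + 2*\<delta>*S (P i))) / card I"
  proof (intro divide_right_mono sum_mono)
    fix i assume "i \<in> I"
    then show "(\<Sum>w\<in>W_set L. P i w * F w) \<le> \<delta>/3 + sqrt ((\<delta>/3)\<^sup>2 + 2*\<delta>*S (P i))"
      using assms(4) by (auto simp: Pset2_def lhs Seq[simplified])
  qed simp
  also have "\<dots> = \<delta>/3 + (\<Sum>i\<in>I. sqrt ((\<delta>/3)\<^sup>2 + 2*\<delta>*S (P i))) / card I"
    using c by (simp add: sum.distrib add_divide_distrib)
  also have "\<dots> \<le> \<delta>/3 + sqrt ((\<Sum>i\<in>I. (\<delta>/3)\<^sup>2 + 2*\<delta>*S (P i)) / card I)"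
    using sqrt_avg[OF assms(2,3), of "\<lambda>i. (\<delta>/3)\<^sup>2 + 2*\<delta>*S (P i)"] S0 d0 by simp
  also have "(\<Sum>i\<in>I. (\<delta>/3)\<^sup>2 + 2*\<delta>*S (P i)) / card I = (\<delta>/3)\<^sup>2 + 2*\<delta>*S (avgP I P)"
    unfolding Savg using c by (simp add: sum.distrib add_divide_distrib sum_distrib_left)
  finally show ?thesis using pm by (simp add: Pset2_def lhs Seq[simplified])
qed

lemma sum_delta2:
  assumes "finite A" "finite B" "a \<in> A" "b \<in> B"
  shows "(\<Sum>X\<in>A. \<Sum>y\<in>B. (if a = X \<and> b = y then 1 else 0) * f X y) = (f a b :: real)"
proof -
  have "(\<Sum>X\<in>A. \<Sum>y\<in>B. (if a = X \<and> b = y then 1 else 0) * f X y)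
      = (\<Sum>X\<in>A. if a = X then (\<Sum>y\<in>B. if b = y then f X y else 0) else 0)"
    by (auto intro!: sum.cong)
  also have "\<dots> = (\<Sum>X\<in>A. if a = X then f X b else 0)"
    using assms by (intro sum.cong refl) (simp add: sum.delta)
  also have "\<dots> = f a b" using assms by (simp add: sum.delta)
  finally show ?thesis .
qed

lemma sum_swap3: "(\<Sum>a\<in>A. \<Sum>b\<in>B. \<Sum>c\<in>C. f a b c) = (\<Sum>b\<in>B. \<Sum>c\<in>C. \<Sum>a\<in>A. f a b c)"
  by (subst sum.swap) (rule sum.cong[OF refl], rule sum.swap)

lemma yseq_nth:
  assumes "length ms = N" "length us = N" "length xs = N" "k < N"
  shows "yseq ms us xs ! k = fY (ms!k, us!k, xs!k)"
  using assms by (simp add: yseq_def)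

lemma count_bound:
  fixes T :: "nat list set" and MS US :: "nat list \<Rightarrow> nat list" and ys :: "(nat \<times> nat) list"
  assumes L2: "L \<ge> 2" and N1: "N \<ge> 1" and TB: "T \<subseteq> binlists N" and Tne: "T \<noteq> {}"
    and wit: "\<forall>x\<in>T. length (MS x) = N \<and> length (US x) = N \<and>
                 (\<forall>k<N. (MS x!k, US x!k, x!k) \<in> W_set L) \<and> yseq (MS x) (US x) x = ys"
  shows "log 2 (card T) \<le> N * cond_entropy_XY L (avgP T (\<lambda>x. tp (MS x) (US x) x))"
proof -
  define Pb where "Pb = avgP T (\<lambda>x. tp (MS x) (US x) x)"
  have finT: "finite T" using finite_subset[OF TB finite_binlists] .
  have cT: "real (card T) > 0" using finT Tne by (simp add: card_gt_0_iff)
  have Npos: "real N > 0" using N1 by simp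
  have lenx: "length x = N" if "x \<in> T" for x using TB that by (auto simp: binlists_def)
  have xk01: "x!k \<in> {0,1}" if "x \<in> T" "k < N" for x k using TB that binlists_nth by blast
  have ysk: "ys!k = fY (MS x!k, US x!k, x!k)" if "x \<in> T" "k < N" for x k
    using wit that lenx[OF that(1)] yseq_nth[of "MS x" N "US x" x k] by auto
  obtain x0 where x0: "x0 \<in> T" using Tne by auto
  have ysY: "ys!k \<in> Y_set L" if "k < N" for k
    using ysk[OF x0 that] wit x0 that fY_W by metis
  define G where "G X y = (\<Sum>x\<in>T. \<Sum>k<N. if x!k = X \<and> ys!k = y then 1 else 0 :: real)" for X y
  have mXY: "marg_XY L Pb X y = G X y / (card T * N)" for X y
  proof -
    define ind where "ind w = (if snd (snd w) = X \<and> fY w = y then 1 else 0 :: real)" for w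
    have "marg_XY L Pb X y = (\<Sum>w\<in>W_set L. Pb w * ind w)"
      unfolding marg_XY_sum ind_def by simp
    also have "\<dots> = (\<Sum>x\<in>T. \<Sum>w\<in>W_set L. tp (MS x) (US x) x w * ind w) / card T"
      unfolding Pb_def by (rule avg_lin)
    also have "\<dots> = (\<Sum>x\<in>T. (\<Sum>k<N. if x!k = X \<and> ys!k = y then 1 else 0) / N) / card T"
    proof (intro arg_cong[where f="\<lambda>z. z / real (card T)"] sum.cong refl)
      fix x assume x: "x \<in> T"
      have tw: "\<forall>k<length x. (MS x!k, US x!k, x!k) \<in> W_set L" using wit x lenx[OF x] by auto
      show "(\<Sum>w\<in>W_set L. tp (MS x) (US x) x w * ind w) = (\<Sum>k<N. if x!k = X \<and> ys!k = y then 1 else 0) / N"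
        unfolding tp_sum[OF tw] lenx[OF x]
        by (intro arg_cong[where f="\<lambda>z. z / real N"] sum.cong refl) (simp add: ind_def ysk[OF x])
    qed
    also have "\<dots> = G X y / (card T * N)"
      unfolding G_def by (simp add: sum_divide_distrib[symmetric] field_simps)
    finally show ?thesis .
  qed
  have G0: "G X y \<ge> 0" for X y unfolding G_def by (intro sum_nonneg) auto
  have Gpos: "G (x!k) (ys!k) \<ge> 1" if x: "x \<in> T" and k: "k < N" for x k
  proof -
    have "(1::real) \<le> (\<Sum>k'<N. if x!k' = x!k \<and> ys!k' = ys!k then 1 else 0)"
      using member_le_sum[of k "{..<N}" "\<lambda>k'. if x!k' = x!k \<and> ys!k' = ys!k then 1 else (0::real)"] k by auto
    also have "\<dots> \<le> G (x!k) (ys!k)"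
      unfolding G_def using x finT
      by (intro member_le_sum[of x T "\<lambda>x'. \<Sum>k'<N. if x'!k' = x!k \<and> ys!k' = ys!k then 1 else (0::real)"])
         (auto intro!: sum_nonneg)
    finally show ?thesis .
  qed
  have mY: "marg_Y L Pb y = (G 0 y + G 1 y) / (card T * N)" for y
    by (simp add: marg_Y_def mXY add_divide_distrib)
  define r where "r y X = marg_XY L Pb X y / marg_Y L Pb y" for y X
  have r0: "r y X \<ge> 0" for y X
    unfolding r_def mY mXY using G0 cT Npos by (intro divide_nonneg_nonneg) auto
  have mYpos: "marg_Y L Pb (ys!k) > 0" if k: "k < N" for k
  proof -
    have "G (x0!k) (ys!k) \<ge> 1" by (rule Gpos[OF x0 k])
    moreover have "G 0 (ys!k) \<ge> 0" "G 1 (ys!k) \<ge> 0" by (rule G0)+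
    ultimately have "G 0 (ys!k) + G 1 (ys!k) > 0" using xk01[OF x0 k] by auto
    then show ?thesis unfolding mY using cT Npos by simp
  qed
  have rpos: "r (ys!k) (x!k) > 0" if x: "x \<in> T" and k: "k < N" for x k
  proof -
    have "marg_XY L Pb (x!k) (ys!k) > 0" unfolding mXY using Gpos[OF x k] cT Npos by simp
    then show ?thesis unfolding r_def using mYpos[OF k] by simp
  qed
  have rsum: "r (ys!k) 0 + r (ys!k) 1 = 1" if k: "k < N" for k
  proof -
    have "r (ys!k) 0 + r (ys!k) 1 = (marg_XY L Pb 0 (ys!k) + marg_XY L Pb 1 (ys!k)) / marg_Y L Pb (ys!k)"
      unfolding r_def by (simp add: add_divide_distrib)
    also have "marg_XY L Pb 0 (ys!k) + marg_XY L Pb 1 (ys!k) = marg_Y L Pb (ys!k)"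
      by (simp add: marg_Y_def)
    finally show ?thesis using mYpos[OF k] by simp
  qed
  have rne: "r (ys!k) (x!k) \<noteq> 0" if "x \<in> T" "k < N" for x k
    using rpos[OF that] by simp
  define R where "R x = (\<Prod>k<N. r (ys!k) (x!k))" for x
  have R0: "R x \<ge> 0" for x unfolding R_def using r0 by (intro prod_nonneg) auto
  have Rpos: "R x > 0" if "x \<in> T" for x unfolding R_def using rpos[OF that] by (intro prod_pos) auto
  have sumR: "(\<Sum>x\<in>binlists N. R x) = 1"
    unfolding R_def using sum_prod_binlists[of "\<lambda>k X. r (ys!k) X" N] rsum by simp
  have sumRT: "(\<Sum>x\<in>T. R x) \<le> 1"
    using sum_mono2[OF finite_binlists TB, of R] R0 sumR by simp
  define A where "A = (\<Sum>x\<in>T. R x) / card T"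
  have Apos: "A > 0" unfolding A_def using Rpos finT Tne cT by (intro divide_pos_pos sum_pos) auto
  have Ale: "A \<le> 1 / card T" unfolding A_def using sumRT cT by (simp add: divide_right_mono)
  have lnsum: "(\<Sum>x\<in>T. ln (R x)) \<le> card T * ln A"
  proof -
    have "(\<Sum>x\<in>T. ln (R x)) \<le> (\<Sum>x\<in>T. ln A + (R x / A - 1))"
    proof (intro sum_mono)
      fix x assume x: "x \<in> T"
      have "ln (R x) = ln A + ln (R x / A)" using Rpos[OF x] Apos by (simp add: ln_div)
      also have "ln (R x / A) \<le> R x / A - 1" using Rpos[OF x] Apos by (intro ln_le_minus_one) simp
      finally show "ln (R x) \<le> ln A + (R x / A - 1)" by simp
    qed
    also have "\<dots> = card T * ln A + ((\<Sum>x\<in>T. R x) / A - card T)"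
      by (simp add: sum.distrib sum_subtractf sum_divide_distrib[symmetric])
    also have "(\<Sum>x\<in>T. R x) / A = card T" unfolding A_def using Apos cT A_def by (simp add: field_simps)
    finally show ?thesis by simp
  qed
  have lnA: "ln A \<le> - ln (card T)"
  proof -
    have "ln A \<le> ln (1 / card T)" using ln_mono[OF Ale Apos] .
    then show ?thesis using cT by (simp add: ln_div)
  qed
  define E where "E = (\<Sum>X\<in>{0::nat,1}. \<Sum>y\<in>Y_set L. marg_XY L Pb X y * ln (r y X))"
  have finY: "finite (Y_set L)"
    by (rule finite_subset[of _ "{0..L-2} \<times> {0..1}"]) (auto simp: Y_set_def)
  have eq: "(\<Sum>x\<in>T. ln (R x)) = card T * N * E"
  proof -
    have "(\<Sum>x\<in>T. ln (R x)) = (\<Sum>x\<in>T. \<Sum>k<N. ln (r (ys!k) (x!k)))"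
      unfolding R_def using rne by (intro sum.cong refl ln_prod) auto
    also have "\<dots> = (\<Sum>x\<in>T. \<Sum>k<N. \<Sum>X\<in>{0::nat,1}. \<Sum>y\<in>Y_set L.
                       (if x!k = X \<and> ys!k = y then 1 else 0) * ln (r y X))"
      using xk01 ysY finY by (intro sum.cong refl sum_delta2[symmetric]) auto
    also have "\<dots> = (\<Sum>X\<in>{0::nat,1}. \<Sum>y\<in>Y_set L. G X y * ln (r y X))"
    proof -
      have "(\<Sum>x\<in>T. \<Sum>k<N. \<Sum>X\<in>{0::nat,1}. \<Sum>y\<in>Y_set L.
                       (if x!k = X \<and> ys!k = y then 1 else 0) * ln (r y X))
          = (\<Sum>x\<in>T. \<Sum>X\<in>{0::nat,1}. \<Sum>y\<in>Y_set L. \<Sum>k<N.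
                       (if x!k = X \<and> ys!k = y then 1 else 0) * ln (r y X))"
        by (intro sum.cong refl sum_swap3)
      also have "\<dots> = (\<Sum>X\<in>{0::nat,1}. \<Sum>y\<in>Y_set L. \<Sum>x\<in>T. \<Sum>k<N.
                       (if x!k = X \<and> ys!k = y then 1 else 0) * ln (r y X))"
        by (rule sum_swap3)
      also have "\<dots> = (\<Sum>X\<in>{0::nat,1}. \<Sum>y\<in>Y_set L. G X y * ln (r y X))"
        unfolding G_def by (simp add: sum_distrib_right)
      finally show ?thesis .
    qed
    also have "\<dots> = card T * N * E"
      unfolding E_def mXY using cT Npos by (simp add: sum_distrib_left field_simps)
    finally show ?thesis .
  qed
  have H: "cond_entropy_XY L Pb = - E / ln 2"
  proof -
    have "cond_entropy_XY L Pb = (\<Sum>X\<in>{0::nat,1}. \<Sum>y\<in>Y_set L. - (marg_XY L Pb X y * ln (r y X)) / ln 2)"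
      unfolding cond_entropy_XY_def r_def by (intro sum.cong refl) (auto simp: log_def)
    also have "\<dots> = - E / ln 2"
      unfolding E_def by (simp only: sum_divide_distrib[symmetric] sum_negf)
    finally show ?thesis .
  qed
  have "card T * (N * E) = (\<Sum>x\<in>T. ln (R x))" using eq by (simp add: mult.assoc)
  also have "\<dots> \<le> card T * ln A" by (rule lnsum)
  also have "\<dots> \<le> card T * (- ln (card T))" using lnA cT by (intro mult_left_mono) auto
  finally have "N * E \<le> - ln (card T)" using cT by (simp only: mult_le_cancel_left_pos)
  then have "ln (card T) \<le> N * (- E)" by simp
  then have "ln (card T) / ln 2 \<le> (N * (- E)) / ln 2" by (rule divide_right_mono) simp
  then have "ln (card T) / ln 2 \<le> N * (- E / ln 2)" by simp
  then show ?thesis unfolding Pb_def[symmetric] H by (simp add: log_def)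
qed

definition comps :: "nat \<Rightarrow> nat \<Rightarrow> (nat \<Rightarrow> nat) set" where
  "comps L n = {w. (\<forall>M>L. w M = 0) \<and> (\<Sum>M\<in>{0..L}. w M) = n}"

lemma comps_0: "comps 0 n = {\<lambda>M. if M = 0 then n else 0}"
proof (intro set_eqI iffI)
  fix w assume "w \<in> comps 0 n"
  then have "\<forall>M>0. w M = 0" "w 0 = n" by (auto simp: comps_def)
  then have "w = (\<lambda>M. if M = 0 then n else 0)" by (auto simp: fun_eq_iff)
  then show "w \<in> {\<lambda>M. if M = 0 then n else 0}" by simp
qed (auto simp: comps_def)

lemma comps_Suc_bij:
  "bij_betw (\<lambda>(k, w). w(Suc L := k)) (SIGMA k:{..n}. comps L (n - k)) (comps (Suc L) n)"
proof (rule bij_betw_byWitness[where f' = "\<lambda>v. (v (Suc L), v(Suc L := 0))"])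
  show "\<forall>a\<in>SIGMA k:{..n}. comps L (n - k). (\<lambda>v. (v (Suc L), v(Suc L := 0))) ((\<lambda>(k, w). w(Suc L := k)) a) = a"
    by (auto simp: comps_def fun_eq_iff)
  show "\<forall>v\<in>comps (Suc L) n. (\<lambda>(k, w). w(Suc L := k)) ((\<lambda>v. (v (Suc L), v(Suc L := 0))) v) = v"
    by auto
  show "(\<lambda>(k, w). w(Suc L := k)) ` (SIGMA k:{..n}. comps L (n - k)) \<subseteq> comps (Suc L) n"
  proof
    fix v assume "v \<in> (\<lambda>(k, w). w(Suc L := k)) ` (SIGMA k:{..n}. comps L (n - k))"
    then obtain k w where k: "k \<in> {..n}" and w: "w \<in> comps L (n - k)" and v: "v = w(Suc L := k)"
      by auto
    have "(\<Sum>M\<in>{0..Suc L}. (w(Suc L := k)) M) = (\<Sum>M\<in>{0..L}. w M) + k"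
      by (simp add: sum.atLeast0_atMost_Suc)
    also have "\<dots> = n" using w k by (simp add: comps_def)
    finally show "v \<in> comps (Suc L) n" unfolding v using w by (auto simp: comps_def)
  qed
  show "(\<lambda>v. (v (Suc L), v(Suc L := 0))) ` comps (Suc L) n \<subseteq> (SIGMA k:{..n}. comps L (n - k))"
  proof
    fix p assume "p \<in> (\<lambda>v. (v (Suc L), v(Suc L := 0))) ` comps (Suc L) n"
    then obtain v where v: "v \<in> comps (Suc L) n" and p: "p = (v (Suc L), v(Suc L := 0))" by auto
    then have s: "(\<Sum>M\<in>{0..L}. v M) + v (Suc L) = n" by (simp add: comps_def sum.atLeast0_atMost_Suc)
    then have 1: "v (Suc L) \<in> {..n}" by auto
    have "(\<Sum>M\<in>{0..L}. (v(Suc L := 0)) M) = (\<Sum>M\<in>{0..L}. v M)" by (intro sum.cong) auto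
    then have 2: "v(Suc L := 0) \<in> comps L (n - v (Suc L))"
      using v s by (auto simp: comps_def)
    show "p \<in> (SIGMA k:{..n}. comps L (n - k))" unfolding p using 1 2 by simp
  qed
qed

lemma finite_comps: "finite (comps L n)"
proof (induction L arbitrary: n)
  case 0 then show ?case by (simp add: comps_0)
next
  case (Suc L)
  have "finite (SIGMA k:{..n}. comps L (n - k))" using Suc by auto
  then show ?case using bij_betw_finite[OF comps_Suc_bij] by blast
qed

lemma multinomial:
  fixes a :: "nat \<Rightarrow> real"
  shows "(\<Sum>w\<in>comps L n. fact n / (\<Prod>M\<in>{0..L}. fact (w M)) * (\<Prod>M\<in>{0..L}. a M ^ w M))
         = (\<Sum>M\<in>{0..L}. a M) ^ n"
proof (induction L arbitrary: n)
  case 0 then show ?case by (simp add: comps_0)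
next
  case (Suc L)
  let ?g = "\<lambda>L' w. fact n / (\<Prod>M\<in>{0..L'}. fact (w M)) * (\<Prod>M\<in>{0..L'}. a M ^ w M) :: real"
  have "(\<Sum>w\<in>comps (Suc L) n. ?g (Suc L) w) = (\<Sum>p\<in>(SIGMA k:{..n}. comps L (n - k)). ?g (Suc L) ((\<lambda>(k, w). w(Suc L := k)) p))"
    by (rule sum.reindex_bij_betw[OF comps_Suc_bij, symmetric])
  also have "\<dots> = (\<Sum>k\<le>n. \<Sum>w\<in>comps L (n - k). ?g (Suc L) (w(Suc L := k)))"
    by (subst sum.Sigma) (auto simp: finite_comps split_def)
  also have "\<dots> = (\<Sum>k\<le>n. real (n choose k) * a (Suc L) ^ k *
                     (\<Sum>w\<in>comps L (n - k). fact (n - k) / (\<Prod>M\<in>{0..L}. fact (w M)) * (\<Prod>M\<in>{0..L}. a M ^ w M)))"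
  proof (intro sum.cong refl)
    fix k assume k: "k \<in> {..n}"
    show "(\<Sum>w\<in>comps L (n - k). ?g (Suc L) (w(Suc L := k))) = real (n choose k) * a (Suc L) ^ k *
                     (\<Sum>w\<in>comps L (n - k). fact (n - k) / (\<Prod>M\<in>{0..L}. fact (w M)) * (\<Prod>M\<in>{0..L}. a M ^ w M))"
      unfolding sum_distrib_left
    proof (intro sum.cong refl)
      fix w
      have p1: "(\<Prod>M\<in>{0..Suc L}. fact ((w(Suc L := k)) M)) = (\<Prod>M\<in>{0..L}. fact (w M)) * (fact k :: real)"
        by (simp add: prod.atLeast0_atMost_Suc)
      have p2: "(\<Prod>M\<in>{0..Suc L}. a M ^ (w(Suc L := k)) M) = (\<Prod>M\<in>{0..L}. a M ^ w M) * a (Suc L) ^ k"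
        by (simp add: prod.atLeast0_atMost_Suc)
      have bc: "real (n choose k) = fact n / (fact k * fact (n - k))"
        using k by (simp add: binomial_fact)
      have pf: "(\<Prod>M\<in>{0..L}. fact (w M)) > (0::real)" by (intro prod_pos) auto
      show "?g (Suc L) (w(Suc L := k)) = real (n choose k) * a (Suc L) ^ k *
              (fact (n - k) / (\<Prod>M\<in>{0..L}. fact (w M)) * (\<Prod>M\<in>{0..L}. a M ^ w M))"
        unfolding p1 p2 bc using pf by (simp add: field_simps)
    qed
  qed
  also have "\<dots> = (\<Sum>k\<le>n. real (n choose k) * a (Suc L) ^ k * (\<Sum>M\<in>{0..L}. a M) ^ (n - k))"
    using Suc.IH by simp
  also have "\<dots> = (a (Suc L) + (\<Sum>M\<in>{0..L}. a M)) ^ n"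
    by (simp add: binomial_ring)
  also have "\<dots> = (\<Sum>M\<in>{0..Suc L}. a M) ^ n"
    by (simp add: sum.atLeast0_atMost_Suc add.commute)
  finally show ?case .
qed

lemma binom_pmf_sum: "(\<Sum>M\<in>{0..L}. binom_pmf L p M) = 1"
proof -
  have "(p + (1 - p)) ^ L = (\<Sum>k\<le>L. real (L choose k) * p ^ k * (1 - p) ^ (L - k))"
    by (rule binomial_ring)
  then have "(\<Sum>M\<in>{0..L}. binom_pmf L p M) = (p + (1 - p)) ^ L"
    by (simp add: binom_pmf_def atLeast0AtMost)
  then show ?thesis by simp
qed

lemma binom_pmf_nonneg: "0 \<le> p \<Longrightarrow> p \<le> 1 \<Longrightarrow> binom_pmf L p M \<ge> 0"
  by (simp add: binom_pmf_def)

lemma binom_pmf_mono: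
  fixes a b :: real
  assumes a0: "0 \<le> a" and ab: "a \<le> b" and b1: "b \<le> 1" and hML: "M \<le> L" and bM: "real L * b \<le> real M"
  shows "binom_pmf L a M \<le> binom_pmf L b M"
proof -
  have "a ^ M * (1 - a) ^ (L - M) \<le> b ^ M * (1 - b) ^ (L - M)"
  proof (cases "M = L")
    case True then show ?thesis using a0 ab by (simp add: power_mono)
  next
    case False
    then have hMLs: "M < L" using hML by simp
    have b1': "b < 1"
    proof (rule ccontr)
      assume "\<not> b < 1" then have "b = 1" using b1 by simp
      then show False using bM hMLs by simp
    qed
    show ?thesis
    proof (cases "a = 0")
      case True
      show ?thesis
      proof (cases "M = 0")
        case True
        then have "b = 0" using bM ab a0 hMLs by (simp add: mult_le_0_iff)
        then show ?thesis using \<open>a = 0\<close> by simp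
      next
        case False
        have "b ^ M * (1 - b) ^ (L - M) \<ge> 0" using b1' ab a0 by simp
        then show ?thesis using \<open>a = 0\<close> False by (simp add: zero_power)
      qed
    next
      case False
      then have apos: "a > 0" using a0 by simp
      then have bpos: "b > 0" using ab by simp
      have M0: "M > 0"
      proof (rule ccontr)
        assume "\<not> M > 0" then have "M = 0" by simp
        then show False using bM bpos hMLs by (simp add: mult_le_0_iff)
      qed
      define u where "u = a / b"
      define v where "v = (1 - a) / (1 - b)"
      have upos: "u > 0" unfolding u_def using apos bpos by simp
      have vpos: "v > 0" unfolding v_def using ab b1' by simp
      have lnu: "ln u \<le> u - 1" using upos by (rule ln_le_minus_one)
      have lnv: "ln v \<le> v - 1" using vpos by (rule ln_le_minus_one)
      have key: "real M * (u - 1) + real (L - M) * (v - 1) \<le> 0"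
      proof -
        have u1: "u - 1 = (a - b) / b" unfolding u_def using bpos by (simp add: field_simps)
        have v1: "v - 1 = (b - a) / (1 - b)" unfolding v_def using b1' by (simp add: field_simps)
        have "real M * (u - 1) + real (L - M) * (v - 1)
              = real M * ((a - b) / b) + (real L - real M) * ((b - a) / (1 - b))"
          unfolding u1 v1 using hML by (simp add: of_nat_diff)
        also have "\<dots> = (b - a) * ((real L - real M) * b - real M * (1 - b)) / (b * (1 - b))"
          using bpos b1' by (simp add: field_simps)
        also have "\<dots> \<le> 0"
        proof (rule divide_nonpos_nonneg)
          have "(real L - real M) * b - real M * (1 - b) = real L * b - real M" by (simp add: algebra_simps)
          then show "(b - a) * ((real L - real M) * b - real M * (1 - b)) \<le> 0"
            using ab bM by (simp add: mult_nonneg_nonpos)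
          show "0 \<le> b * (1 - b)" using bpos b1' by simp
        qed
        finally show ?thesis .
      qed
      have "ln (u ^ M * v ^ (L - M)) = real M * ln u + real (L - M) * ln v"
        using upos vpos by (simp add: ln_mult ln_realpow)
      also have "\<dots> \<le> real M * (u - 1) + real (L - M) * (v - 1)"
        using lnu lnv by (intro add_mono mult_left_mono) auto
      also have "\<dots> \<le> 0" by (rule key)
      finally have le1: "u ^ M * v ^ (L - M) \<le> 1" using upos vpos by simp
      have nn1: "u ^ M * v ^ (L - M) \<ge> 0" using upos vpos by simp
      have "a ^ M * (1 - a) ^ (L - M) = (u ^ M * v ^ (L - M)) * (b ^ M * (1 - b) ^ (L - M))"
        unfolding u_def v_def using bpos b1' by (simp add: power_divide field_simps)
      moreover have nn2: "b ^ M * (1 - b) ^ (L - M) \<ge> 0" using bpos b1' by simp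
      ultimately show ?thesis using mult_left_le_one_le[OF nn2 nn1 le1] by simp
    qed
  qed
  then show ?thesis unfolding binom_pmf_def by (simp add: mult.assoc mult_left_mono)
qed

lemma tilt:
  fixes b nu :: "nat \<Rightarrow> real" and t :: real and L Nem Ms :: nat
  assumes b0: "\<forall>M\<in>{0..L}. b M \<ge> 0" and bs: "(\<Sum>M\<in>{0..L}. b M) = 1"
    and nu0: "\<forall>M\<in>{0..L}. nu M \<ge> 0" and tge: "(\<Sum>M\<in>{0..L}. b M * nu M) \<le> t"
    and Ms: "Ms \<in> {0..L}" "b Ms > 0" "nu Ms > t"
  shows "\<exists>s\<ge>0. \<exists>Q. is_pmf_on {0..L} Q \<and> (\<Sum>M\<in>{0..L}. Q M * nu M) \<ge> t \<and>
            (\<forall>M\<in>{0..L}. b M = 0 \<longrightarrow> Q M = 0) \<and>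
            2 powr (- real Nem * KL2 L Q b) = (\<Sum>M\<in>{0..L}. b M * exp (s * nu M)) ^ Nem * exp (- s * Nem * t)"
proof -
  define Z where "Z x = (\<Sum>M\<in>{0..L}. b M * exp (x * nu M))" for x
  define f where "f x = (\<Sum>M\<in>{0..L}. b M * nu M * exp (x * nu M)) / Z x" for x
  have "(\<Sum>M\<in>{0..L}. b M * nu M) \<ge> 0" using b0 nu0 by (intro sum_nonneg) auto
  then have t0: "t \<ge> 0" using tge by linarith
  have Zpos: "Z x > 0" for x
  proof -
    have "b Ms * exp (x * nu Ms) \<le> Z x"
      unfolding Z_def using Ms b0 by (intro member_le_sum) auto
    moreover have "b Ms * exp (x * nu Ms) > 0" using Ms by simp
    ultimately show ?thesis by linarith
  qed
  have f0: "f 0 \<le> t" unfolding f_def Z_def using tge bs by simp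
  define d where "d = nu Ms - t"
  define \<beta> where "\<beta> = b Ms"
  define r where "r = t / (\<beta> * d)"
  define Lm where "Lm = \<bar>ln r\<bar> / d"
  have dpos: "d > 0" unfolding d_def using Ms by simp
  have bpos: "\<beta> > 0" unfolding \<beta>_def using Ms by simp
  have r0: "r \<ge> 0" unfolding r_def using t0 dpos bpos by simp
  have L0: "Lm \<ge> 0" unfolding Lm_def using dpos by simp
  have eL: "exp (Lm * d) \<ge> r"
  proof (cases "r = 0")
    case True then show ?thesis by simp
  next
    case False
    then have "r > 0" using r0 by simp
    have "Lm * d = \<bar>ln r\<bar>" unfolding Lm_def using dpos by simp
    then have "exp (Lm * d) \<ge> exp (ln r)" by simp
    then show ?thesis using \<open>r > 0\<close> by simp
  qed
  have fL: "f Lm \<ge> t"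
  proof -
    have split: "(\<Sum>M\<in>{0..L}. b M * (nu M - t) * exp (Lm * nu M))
        = b Ms * (nu Ms - t) * exp (Lm * nu Ms) + (\<Sum>M\<in>{0..L} - {Ms}. b M * (nu M - t) * exp (Lm * nu M))"
      using Ms by (simp add: sum.remove)
    have lb: "b M * (nu M - t) * exp (Lm * nu M) \<ge> - (b M * (t * exp (Lm * t)))" if M: "M \<in> {0..L}" for M
    proof (cases "nu M \<ge> t")
      case True
      have "b M * (nu M - t) * exp (Lm * nu M) \<ge> 0" using b0 M True by simp
      moreover have "b M * (t * exp (Lm * t)) \<ge> 0" using b0 M t0 by simp
      ultimately show ?thesis by linarith
    next
      case False
      have e: "exp (Lm * nu M) \<le> exp (Lm * t)" using False L0 by (simp add: mult_left_mono)
      have tn: "t - nu M \<le> t" using nu0 M by simp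
      have A: "b M * (t - nu M) \<le> b M * t" using b0 M tn by (simp add: mult_left_mono)
      have B: "b M * t \<ge> 0" using b0 M t0 by simp
      have "b M * (t - nu M) * exp (Lm * nu M) \<le> b M * t * exp (Lm * t)"
        using mult_mono[OF A e B exp_ge_zero] .
      then show ?thesis by (simp add: algebra_simps)
    qed
    have "(\<Sum>M\<in>{0..L} - {Ms}. b M * (nu M - t) * exp (Lm * nu M))
        \<ge> (\<Sum>M\<in>{0..L} - {Ms}. - (b M * (t * exp (Lm * t))))"
      using lb by (intro sum_mono) auto
    also have "(\<Sum>M\<in>{0..L} - {Ms}. - (b M * (t * exp (Lm * t)))) = - ((\<Sum>M\<in>{0..L} - {Ms}. b M) * (t * exp (Lm * t)))"
      by (simp add: sum_distrib_right sum_negf)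
    also have "\<dots> \<ge> - (t * exp (Lm * t))"
    proof -
      have "(\<Sum>M\<in>{0..L} - {Ms}. b M) \<le> (\<Sum>M\<in>{0..L}. b M)"
        using b0 by (intro sum_mono2) auto
      then have y1: "(\<Sum>M\<in>{0..L} - {Ms}. b M) \<le> 1" using bs by simp
      have x0: "t * exp (Lm * t) \<ge> 0" using t0 by simp
      have y0: "(\<Sum>M\<in>{0..L} - {Ms}. b M) \<ge> 0" using b0 by (intro sum_nonneg) auto
      show ?thesis using mult_left_le_one_le[OF x0 y0 y1] by simp
    qed
    finally have s2: "(\<Sum>M\<in>{0..L} - {Ms}. b M * (nu M - t) * exp (Lm * nu M)) \<ge> - (t * exp (Lm * t))" .
    have s1: "b Ms * (nu Ms - t) * exp (Lm * nu Ms) \<ge> t * exp (Lm * t)"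
    proof -
      have "nu Ms = t + d" unfolding d_def by simp
      then have "exp (Lm * nu Ms) = exp (Lm * t) * exp (Lm * d)" by (simp add: distrib_left exp_add)
      then have "b Ms * (nu Ms - t) * exp (Lm * nu Ms) = \<beta> * d * exp (Lm * t) * exp (Lm * d)"
        unfolding \<beta>_def d_def by simp
      also have "\<dots> \<ge> \<beta> * d * exp (Lm * t) * r"
        using eL bpos dpos by (intro mult_left_mono) auto
      also have "\<beta> * d * exp (Lm * t) * r = t * exp (Lm * t)"
        unfolding r_def using bpos dpos by simp
      finally show ?thesis .
    qed
    have "(\<Sum>M\<in>{0..L}. b M * (nu M - t) * exp (Lm * nu M)) \<ge> 0"
      using split s1 s2 by linarith
    moreover have "(\<Sum>M\<in>{0..L}. b M * (nu M - t) * exp (Lm * nu M))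
        = (\<Sum>M\<in>{0..L}. b M * nu M * exp (Lm * nu M)) - t * Z Lm"
    proof -
      have "(\<Sum>M\<in>{0..L}. b M * (nu M - t) * exp (Lm * nu M))
          = (\<Sum>M\<in>{0..L}. b M * nu M * exp (Lm * nu M) - t * (b M * exp (Lm * nu M)))"
        by (intro sum.cong refl) (simp add: algebra_simps)
      also have "\<dots> = (\<Sum>M\<in>{0..L}. b M * nu M * exp (Lm * nu M)) - t * Z Lm"
        unfolding Z_def by (simp only: sum_subtractf sum_distrib_left)
      finally show ?thesis .
    qed
    ultimately have "(\<Sum>M\<in>{0..L}. b M * nu M * exp (Lm * nu M)) - t * Z Lm \<ge> 0" by simp
    then show ?thesis unfolding f_def using Zpos[of Lm] by (simp add: field_simps)
  qed
  have cont: "continuous_on {0..Lm} f"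
  proof -
    have c1: "continuous_on {0..Lm} (\<lambda>x. \<Sum>M\<in>{0..L}. b M * nu M * exp (x * nu M))"
      by (intro continuous_intros)
    have c2: "continuous_on {0..Lm} Z" unfolding Z_def by (intro continuous_intros)
    have "\<forall>x\<in>{0..Lm}. Z x \<noteq> 0" using Zpos by (simp add: less_imp_neq[symmetric])
    from continuous_on_divide[OF c1 c2] this show ?thesis unfolding f_def by blast
  qed
  obtain s where lam: "0 \<le> s" "s \<le> Lm" "f s = t"
    using IVT'[of f 0 t Lm, OF f0 fL L0 cont] by auto
  define Q where "Q M = (if M \<in> {0..L} then b M * exp (s * nu M) / Z s else 0)" for M
  have Zl: "Z s > 0" by (rule Zpos)
  have Qpmf: "is_pmf_on {0..L} Q"
    unfolding is_pmf_on_def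
  proof (intro conjI allI impI)
    show "0 \<le> Q w" for w unfolding Q_def using b0 Zl by auto
    show "Q w = 0" if "w \<notin> {0..L}" for w unfolding Q_def using that by simp
    have "(\<Sum>w\<in>{0..L}. Q w) = (\<Sum>w\<in>{0..L}. b w * exp (s * nu w)) / Z s"
      unfolding Q_def by (simp add: sum_divide_distrib)
    then show "(\<Sum>w\<in>{0..L}. Q w) = 1" using Zl unfolding Z_def by simp
  qed
  have Qnu: "(\<Sum>M\<in>{0..L}. Q M * nu M) = t"
  proof -
    have "(\<Sum>M\<in>{0..L}. Q M * nu M) = f s"
      unfolding f_def Q_def by (simp add: sum_divide_distrib algebra_simps)
    then show ?thesis using lam by simp
  qed
  have Qac: "\<forall>M\<in>{0..L}. b M = 0 \<longrightarrow> Q M = 0" unfolding Q_def by simp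
  have KL: "KL2 L Q b = (s * t - ln (Z s)) / ln 2"
  proof -
    have "KL2 L Q b = (\<Sum>M\<in>{0..L}. Q M * (s * nu M - ln (Z s)) / ln 2)"
      unfolding KL2_def
    proof (intro sum.cong refl)
      fix M assume M: "M \<in> {0..L}"
      show "(if Q M = 0 then 0 else Q M * log 2 (Q M / b M)) = Q M * (s * nu M - ln (Z s)) / ln 2"
      proof (cases "Q M = 0")
        case True then show ?thesis by simp
      next
        case False
        then have bM: "b M \<noteq> 0" using M unfolding Q_def by auto
        have "Q M / b M = exp (s * nu M) / Z s" unfolding Q_def using M bM by simp
        then have "log 2 (Q M / b M) = (s * nu M - ln (Z s)) / ln 2"
          using Zl by (simp add: log_def ln_div)
        then show ?thesis using False by simp
      qed
    qed
    also have "\<dots> = (\<Sum>M\<in>{0..L}. Q M * nu M * s - Q M * ln (Z s)) / ln 2"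
      by (simp add: sum_divide_distrib algebra_simps)
    also have "\<dots> = ((\<Sum>M\<in>{0..L}. Q M * nu M) * s - (\<Sum>M\<in>{0..L}. Q M) * ln (Z s)) / ln 2"
      by (simp only: sum_subtractf sum_distrib_right)
    also have "\<dots> = (s * t - ln (Z s)) / ln 2"
      using Qnu Qpmf by (simp add: is_pmf_on_def mult.commute)
    finally show ?thesis .
  qed
  have "2 powr (- real Nem * KL2 L Q b) = exp (- real Nem * ((s * t - ln (Z s)) / ln 2) * ln 2)"
    unfolding KL by (simp add: powr_def)
  also have "\<dots> = exp (real Nem * ln (Z s)) * exp (- s * Nem * t)"
  proof -
    have "- real Nem * ((s * t - ln (Z s)) / ln 2) * ln 2 = real Nem * ln (Z s) + (- s * Nem * t)"
      by (simp add: field_simps)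
    then show ?thesis by (simp add: exp_diff exp_minus divide_inverse)
  qed
  also have "exp (real Nem * ln (Z s)) = Z s ^ Nem"
    using Zl by (simp add: exp_of_nat_mult)
  finally show ?thesis using lam Qpmf Qnu Qac unfolding Z_def by (intro exI[of _ s]) auto
qed

lemma prod_01:
  fixes L :: nat
  assumes "L \<ge> 2" "\<forall>M\<in>{2..L}. g M = 1"
  shows "(\<Prod>M\<in>{0..L}. g M) = g 0 * (g 1 :: real)"
proof -
  have e: "{0..L} = insert 0 (insert 1 {2..L})" using assms(1) by auto
  have "(\<Prod>M\<in>{2..L}. g M) = 1" using assms(2) by simp
  then show ?thesis unfolding e by simp
qed

lemma podd_nonneg:
  fixes \<Omega> :: "'a pmf" and v :: "'a \<Rightarrow> nat \<Rightarrow> nat" and L Nem :: nat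
  assumes L2: "L \<ge> 2" and N1: "Nem \<ge> 1"
    and A: "\<forall>w :: nat \<Rightarrow> nat. (\<Sum>M\<in>{0..L}. w M) = Nem \<longrightarrow>
         measure_pmf.prob \<Omega> {\<omega>. \<forall>M\<in>{0..L}. v \<omega> M = w M}
           = fact Nem / (\<Prod>M\<in>{0..L}. fact (w M))
             * (\<Prod>M\<in>{0..L}. (binom_pmf L podd M) ^ (w M))"
  shows "podd \<ge> 0"
proof (rule ccontr)
  assume "\<not> podd \<ge> 0"
  then have neg: "podd < 0" by simp
  define w :: "nat \<Rightarrow> nat" where "w M = (if M = 0 then Nem - 1 else if M = 1 then 1 else 0)" for M
  have ws: "(\<Sum>M\<in>{0..L}. w M) = Nem"
  proof -
    have e: "{0..L} = insert 0 (insert 1 {2..L})" using L2 by auto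
    have "(\<Sum>M\<in>{2..L}. w M) = 0" unfolding w_def by simp
    then show ?thesis unfolding e using N1 by (simp add: w_def)
  qed
  have pf: "(\<Prod>M\<in>{0..L}. fact (w M) :: real) = fact (Nem - 1)"
    using prod_01[OF L2, of "\<lambda>M. fact (w M)"] by (simp add: w_def)
  have pb: "(\<Prod>M\<in>{0..L}. (binom_pmf L podd M) ^ (w M)) = (binom_pmf L podd 0) ^ (Nem - 1) * binom_pmf L podd 1"
    using prod_01[OF L2, of "\<lambda>M. (binom_pmf L podd M) ^ (w M)"] by (simp add: w_def)
  have b0: "binom_pmf L podd 0 > 0" using neg by (simp add: binom_pmf_def)
  have b1: "binom_pmf L podd 1 < 0"
  proof -
    have "binom_pmf L podd 1 = real L * (podd * (1 - podd) ^ (L - 1))" by (simp add: binom_pmf_def)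
    moreover have "podd * (1 - podd) ^ (L - 1) < 0" using neg by (simp add: mult_neg_pos)
    ultimately show ?thesis using L2 by (simp add: mult_pos_neg)
  qed
  have "measure_pmf.prob \<Omega> {\<omega>. \<forall>M\<in>{0..L}. v \<omega> M = w M}
        = fact Nem / fact (Nem - 1) * ((binom_pmf L podd 0) ^ (Nem - 1) * binom_pmf L podd 1)"
    using A ws pf pb by simp
  also have "\<dots> < 0"
    using b0 b1 by (intro mult_pos_neg) (auto intro: divide_pos_pos mult_pos_neg)
  finally show False using measure_nonneg[of "measure_pmf \<Omega>"] by (simp add: not_less[symmetric])
qed

lemma probA1:
  fixes \<Omega> :: "'a pmf" and v :: "'a \<Rightarrow> nat \<Rightarrow> nat" and L Nem :: nat and psrc \<delta>1 \<eta>1 :: real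
    and nu :: "nat \<Rightarrow> real"
  assumes hL: "L \<ge> 2" and hNem: "Nem \<ge> 1" and hp: "0 \<le> psrc" "psrc \<le> 1"
    and v_range: "\<forall>\<omega>\<in>set_pmf \<Omega>. (\<Sum>M\<in>{0..L}. v \<omega> M) = Nem"
    and condA: "\<exists>podd \<le> psrc. \<forall>w :: nat \<Rightarrow> nat. (\<Sum>M\<in>{0..L}. w M) = Nem \<longrightarrow>
         measure_pmf.prob \<Omega> {\<omega>. \<forall>M\<in>{0..L}. v \<omega> M = w M}
           = fact Nem / (\<Prod>M\<in>{0..L}. fact (w M))
             * (\<Prod>M\<in>{0..L}. (binom_pmf L podd M) ^ (w M))"
    and nu_nonneg: "\<forall>M\<in>{0..L}. 0 \<le> nu M"
    and nu_zero: "\<forall>M\<in>{0..L}. real M < real L * psrc \<longrightarrow> nu M = 0"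
    and h\<eta>1: "0 \<le> \<eta>1" and h\<delta>1: "0 \<le> \<delta>1"
    and max1: "\<forall>Q. is_pmf_on {0..L} Q \<longrightarrow>
         (\<Sum>M\<in>{0..L}. Q M * nu M) \<ge> (\<Sum>M\<in>{0..L}. binom_pmf L psrc M * nu M) + \<delta>1 \<longrightarrow>
         (\<forall>M\<in>{0..L}. binom_pmf L psrc M = 0 \<longrightarrow> Q M = 0) \<longrightarrow>
         2 powr (- real Nem * KL2 L Q (binom_pmf L psrc)) \<le> \<eta>1"
  shows "measure_pmf.prob \<Omega> {\<omega>. real Nem * ((\<Sum>M\<in>{0..L}. binom_pmf L psrc M * nu M) + \<delta>1)
            < (\<Sum>M\<in>{0..L}. real (v \<omega> M) * nu M)} \<le> \<eta>1"
proof -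
  obtain podd where po: "podd \<le> psrc" and A: "\<forall>w :: nat \<Rightarrow> nat. (\<Sum>M\<in>{0..L}. w M) = Nem \<longrightarrow>
         measure_pmf.prob \<Omega> {\<omega>. \<forall>M\<in>{0..L}. v \<omega> M = w M}
           = fact Nem / (\<Prod>M\<in>{0..L}. fact (w M))
             * (\<Prod>M\<in>{0..L}. (binom_pmf L podd M) ^ (w M))"
    using condA by blast
  have p0: "podd \<ge> 0" by (rule podd_nonneg[OF hL hNem A])
  have p1: "podd \<le> 1" using po hp by simp
  define b where "b = binom_pmf L psrc"
  define bo where "bo = binom_pmf L podd"
  define t where "t = (\<Sum>M\<in>{0..L}. b M * nu M) + \<delta>1"
  define mult where "mult w = (fact Nem / (\<Prod>M\<in>{0..L}. fact (w M)) :: real)" for w :: "nat \<Rightarrow> nat"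
  have mult0: "mult w \<ge> 0" for w unfolding mult_def by (intro divide_nonneg_nonneg prod_nonneg) auto
  have b0: "b M \<ge> 0" for M unfolding b_def using hp by (rule binom_pmf_nonneg)
  have bo0: "bo M \<ge> 0" for M unfolding bo_def using p0 p1 by (rule binom_pmf_nonneg)
  have t0: "t \<ge> 0"
  proof -
    have "(\<Sum>M\<in>{0..L}. b M * nu M) \<ge> 0" using b0 nu_nonneg by (intro sum_nonneg) auto
    then show ?thesis unfolding t_def using h\<delta>1 by simp
  qed
  define rv where "rv \<omega> = (\<lambda>M. if M \<le> L then v \<omega> M else 0)" for \<omega>
  define V where "V = map_pmf rv \<Omega>"
  define B' where "B' = {w :: nat \<Rightarrow> nat. real Nem * t < (\<Sum>M\<in>{0..L}. real (w M) * nu M)}"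
  have ev: "{\<omega>. real Nem * ((\<Sum>M\<in>{0..L}. binom_pmf L psrc M * nu M) + \<delta>1)
            < (\<Sum>M\<in>{0..L}. real (v \<omega> M) * nu M)} = rv -` B'"
  proof -
    have "(\<Sum>M\<in>{0..L}. real (rv \<omega> M) * nu M) = (\<Sum>M\<in>{0..L}. real (v \<omega> M) * nu M)" for \<omega>
      unfolding rv_def by (intro sum.cong) auto
    then show ?thesis unfolding B'_def t_def b_def by auto
  qed
  have setV: "set_pmf V \<subseteq> comps L Nem"
  proof
    fix w assume "w \<in> set_pmf V"
    then obtain \<omega> where \<omega>: "\<omega> \<in> set_pmf \<Omega>" and w: "w = rv \<omega>" unfolding V_def by auto
    have "(\<Sum>M\<in>{0..L}. rv \<omega> M) = (\<Sum>M\<in>{0..L}. v \<omega> M)" unfolding rv_def by (intro sum.cong) auto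
    then show "w \<in> comps L Nem" unfolding w comps_def using v_range \<omega> by (auto simp: rv_def)
  qed
  have pmfV: "pmf V w = mult w * (\<Prod>M\<in>{0..L}. bo M ^ w M)" if w: "w \<in> comps L Nem" for w
  proof -
    have "rv -` {w} = {\<omega>. \<forall>M\<in>{0..L}. v \<omega> M = w M}"
    proof (intro set_eqI iffI)
      fix \<omega> assume "\<omega> \<in> rv -` {w}"
      then have h: "\<And>M. (if M \<le> L then v \<omega> M else 0) = w M" unfolding rv_def by (simp add: fun_eq_iff)
      have "v \<omega> M = w M" if "M \<in> {0..L}" for M using h[of M] that by simp
      then show "\<omega> \<in> {\<omega>. \<forall>M\<in>{0..L}. v \<omega> M = w M}" by simp
    next
      fix \<omega> assume "\<omega> \<in> {\<omega>. \<forall>M\<in>{0..L}. v \<omega> M = w M}"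
      then show "\<omega> \<in> rv -` {w}" using w unfolding rv_def comps_def by (auto simp: fun_eq_iff)
    qed
    moreover have "(\<Sum>M\<in>{0..L}. w M) = Nem" using w by (simp add: comps_def)
    ultimately show ?thesis unfolding V_def pmf_map mult_def bo_def using A by simp
  qed
  have "measure_pmf.prob \<Omega> (rv -` B') = measure_pmf.prob V B'" unfolding V_def by simp
  also have "\<dots> = measure_pmf.prob V (B' \<inter> set_pmf V)" by (simp add: measure_Int_set_pmf)
  also have "\<dots> \<le> measure_pmf.prob V (B' \<inter> comps L Nem)"
    using setV by (intro measure_pmf.finite_measure_mono) auto
  also have "\<dots> = (\<Sum>w\<in>B' \<inter> comps L Nem. pmf V w)"
    by (rule measure_measure_pmf_finite) (simp add: finite_comps)
  also have "\<dots> \<le> \<eta>1"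
  proof (cases "\<exists>Ms\<in>{0..L}. bo Ms > 0 \<and> nu Ms > t")
    case False
    have "pmf V w = 0" if w: "w \<in> B' \<inter> comps L Nem" for w
    proof (rule ccontr)
      assume ne: "pmf V w \<noteq> 0"
      then have "(\<Prod>M\<in>{0..L}. bo M ^ w M) \<noteq> 0" using pmfV w by auto
      then have nz: "\<forall>M\<in>{0..L}. bo M ^ w M \<noteq> 0" by auto
      have "(\<Sum>M\<in>{0..L}. real (w M) * nu M) \<le> (\<Sum>M\<in>{0..L}. real (w M) * t)"
      proof (intro sum_mono)
        fix M assume M: "M \<in> {0..L}"
        show "real (w M) * nu M \<le> real (w M) * t"
        proof (cases "w M = 0")
          case True then show ?thesis by simp
        next
          case False
          then have "bo M \<noteq> 0" using nz M by auto
          then have "bo M > 0" using bo0[of M] by simp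
          then have "nu M \<le> t" using \<open>\<not> (\<exists>Ms\<in>{0..L}. bo Ms > 0 \<and> nu Ms > t)\<close> M by auto
          then show ?thesis by (simp add: mult_left_mono)
        qed
      qed
      also have "\<dots> = real Nem * t" using w by (simp add: comps_def sum_distrib_right[symmetric] of_nat_sum[symmetric])
      finally show False using w by (simp add: B'_def)
    qed
    then have "(\<Sum>w\<in>B' \<inter> comps L Nem. pmf V w) = 0" by simp
    then show ?thesis using h\<eta>1 by simp
  next
    case True
    then obtain Ms where Ms: "Ms \<in> {0..L}" "bo Ms > 0" "nu Ms > t" by blast
    have "nu Ms \<noteq> 0" using Ms t0 by simp
    then have MsL: "real L * psrc \<le> real Ms" using nu_zero Ms by (meson not_less)
    have "bo Ms \<le> b Ms" unfolding bo_def b_def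
      using Ms by (intro binom_pmf_mono[OF p0 po hp(2) _ MsL]) auto
    then have bMs: "b Ms > 0" using Ms by simp
    have bs: "(\<Sum>M\<in>{0..L}. b M) = 1" unfolding b_def by (rule binom_pmf_sum)
    have tge: "(\<Sum>M\<in>{0..L}. b M * nu M) \<le> t" unfolding t_def using h\<delta>1 by simp
    obtain s Q where s0: "s \<ge> 0" and Qp: "is_pmf_on {0..L} Q" and Qnu: "(\<Sum>M\<in>{0..L}. Q M * nu M) \<ge> t"
      and Qac: "\<forall>M\<in>{0..L}. b M = 0 \<longrightarrow> Q M = 0"
      and Qeq: "2 powr (- real Nem * KL2 L Q b) = (\<Sum>M\<in>{0..L}. b M * exp (s * nu M)) ^ Nem * exp (- s * Nem * t)"
      using tilt[of L b nu t Ms Nem] b0 bs nu_nonneg tge Ms(1) bMs Ms(3) by blast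
    have eta: "(\<Sum>M\<in>{0..L}. b M * exp (s * nu M)) ^ Nem * exp (- s * Nem * t) \<le> \<eta>1"
      using max1 Qp Qnu Qac Qeq unfolding t_def b_def by auto
    define Zo where "Zo = (\<Sum>M\<in>{0..L}. bo M * exp (s * nu M))"
    define Z where "Z = (\<Sum>M\<in>{0..L}. b M * exp (s * nu M))"
    have Zo0: "Zo \<ge> 0" unfolding Zo_def using bo0 by (intro sum_nonneg) auto
    have ZoZ: "Zo \<le> Z"
    proof -
      have "Z - Zo = (\<Sum>M\<in>{0..L}. (b M - bo M) * (exp (s * nu M) - 1) + (b M - bo M))"
        unfolding Z_def Zo_def by (simp only: sum_subtractf[symmetric]) (intro sum.cong refl, simp add: algebra_simps)
      also have "\<dots> = (\<Sum>M\<in>{0..L}. (b M - bo M) * (exp (s * nu M) - 1)) + ((\<Sum>M\<in>{0..L}. b M) - (\<Sum>M\<in>{0..L}. bo M))"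
        by (simp only: sum.distrib sum_subtractf)
      also have "(\<Sum>M\<in>{0..L}. b M) - (\<Sum>M\<in>{0..L}. bo M) = 0"
        unfolding b_def bo_def by (simp add: binom_pmf_sum)
      also have "(\<Sum>M\<in>{0..L}. (b M - bo M) * (exp (s * nu M) - 1)) \<ge> 0"
      proof (intro sum_nonneg)
        fix M assume M: "M \<in> {0..L}"
        show "(b M - bo M) * (exp (s * nu M) - 1) \<ge> 0"
        proof (cases "nu M = 0")
          case True then show ?thesis by simp
        next
          case False
          then have "real L * psrc \<le> real M" using nu_zero M by (meson not_less)
          then have "bo M \<le> b M" unfolding bo_def b_def
            using M by (intro binom_pmf_mono[OF p0 po hp(2)]) auto
          moreover have "exp (s * nu M) \<ge> 1" using s0 nu_nonneg M by simp
          ultimately show ?thesis by simp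
        qed
      qed
      ultimately show ?thesis by simp
    qed
    have "(\<Sum>w\<in>B' \<inter> comps L Nem. pmf V w)
        \<le> (\<Sum>w\<in>B' \<inter> comps L Nem. pmf V w * exp (s * ((\<Sum>M\<in>{0..L}. real (w M) * nu M) - Nem * t)))"
    proof (intro sum_mono)
      fix w assume w: "w \<in> B' \<inter> comps L Nem"
      then have "exp (s * ((\<Sum>M\<in>{0..L}. real (w M) * nu M) - Nem * t)) \<ge> 1"
        using s0 by (simp add: B'_def)
      then show "pmf V w \<le> pmf V w * exp (s * ((\<Sum>M\<in>{0..L}. real (w M) * nu M) - Nem * t))"
        by (simp add: mult_le_cancel_left1)
    qed
    also have "\<dots> \<le> (\<Sum>w\<in>comps L Nem. pmf V w * exp (s * ((\<Sum>M\<in>{0..L}. real (w M) * nu M) - Nem * t)))"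
      by (intro sum_mono2) (auto simp: finite_comps)
    also have "\<dots> = (\<Sum>w\<in>comps L Nem. exp (- s * Nem * t) * (mult w * (\<Prod>M\<in>{0..L}. (bo M * exp (s * nu M)) ^ w M)))"
    proof (intro sum.cong refl)
      fix w assume w: "w \<in> comps L Nem"
      have "exp (s * ((\<Sum>M\<in>{0..L}. real (w M) * nu M) - Nem * t))
           = exp (\<Sum>M\<in>{0..L}. real (w M) * (s * nu M)) * exp (- s * Nem * t)"
        by (simp add: exp_diff exp_minus divide_inverse sum_distrib_left algebra_simps)
      also have "exp (\<Sum>M\<in>{0..L}. real (w M) * (s * nu M)) = (\<Prod>M\<in>{0..L}. exp (s * nu M) ^ w M)"
        by (simp add: exp_sum exp_of_nat_mult)
      finally have e: "exp (s * ((\<Sum>M\<in>{0..L}. real (w M) * nu M) - Nem * t))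
           = (\<Prod>M\<in>{0..L}. exp (s * nu M) ^ w M) * exp (- s * Nem * t)" .
      show "pmf V w * exp (s * ((\<Sum>M\<in>{0..L}. real (w M) * nu M) - Nem * t))
          = exp (- s * Nem * t) * (mult w * (\<Prod>M\<in>{0..L}. (bo M * exp (s * nu M)) ^ w M))"
        unfolding e pmfV[OF w] by (simp add: power_mult_distrib prod.distrib)
    qed
    also have "\<dots> = exp (- s * Nem * t) * Zo ^ Nem"
    proof -
      have "(\<Sum>w\<in>comps L Nem. mult w * (\<Prod>M\<in>{0..L}. (bo M * exp (s * nu M)) ^ w M)) = Zo ^ Nem"
        unfolding mult_def Zo_def by (rule multinomial)
      then show ?thesis by (simp only: sum_distrib_left[symmetric])
    qed
    also have "\<dots> \<le> exp (- s * Nem * t) * Z ^ Nem"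
      using Zo0 ZoZ by (intro mult_left_mono power_mono) auto
    also have "\<dots> \<le> \<eta>1" using eta unfolding Z_def by (simp add: mult.commute)
    finally show ?thesis .
  qed
  finally show ?thesis unfolding ev .
qed

lemma pmf_fiber_bound:
  fixes D :: "('t \<times> 'x) pmf" and \<eta> :: real
  assumes e0: "\<eta> \<ge> 0"
    and fib: "\<forall>t\<in>set_pmf (map_pmf fst D).
       measure_pmf.prob D (A \<inter> {z. fst z = t}) \<le> \<eta> * measure_pmf.prob D {z. fst z = t}"
  shows "measure_pmf.prob D A \<le> \<eta>"
proof -
  define D3 where "D3 = map_pmf fst D"
  define K where "K t = cond_pmf D {z. fst z = t}" for t
  have ne: "set_pmf D \<inter> {z. fst z = t} \<noteq> {}" if "t \<in> set_pmf D3" for t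
    using that unfolding D3_def by auto
  have bind: "bind_pmf D3 K = D"
    unfolding K_def
  proof (rule bind_cond_pmf_cancel)
    show "\<And>x. x \<in> set_pmf D3 \<Longrightarrow> set_pmf D \<inter> {y. fst y = x} \<noteq> {}" by (rule ne)
    show "\<And>y. y \<in> set_pmf D \<Longrightarrow> set_pmf D3 \<inter> {x. fst y = x} \<noteq> {}" unfolding D3_def by auto
    show "\<And>x y. x \<in> set_pmf D3 \<Longrightarrow> y \<in> set_pmf D \<Longrightarrow> fst y = x \<Longrightarrow>
        measure_pmf.prob D {y. fst y = x} = measure_pmf.prob D3 {x. fst y = x}"
      unfolding D3_def by (simp add: vimage_def eq_commute)
  qed
  have Kb: "emeasure (measure_pmf (K t)) A \<le> ennreal \<eta>" if t: "t \<in> set_pmf D3" for t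
  proof -
    have pos: "measure_pmf.prob D {z. fst z = t} > 0"
      using ne[OF t] by (auto intro: measure_pmf_posI)
    have "emeasure (measure_pmf (K t)) A
        = emeasure (measure_pmf D) (A \<inter> {z. fst z = t}) / emeasure (measure_pmf D) {z. fst z = t}"
      unfolding K_def cond_pmf.rep_eq[OF ne[OF t]] by (simp add: Int_commute)
    also have "\<dots> = ennreal (measure_pmf.prob D (A \<inter> {z. fst z = t}) / measure_pmf.prob D {z. fst z = t})"
      using pos by (simp add: measure_pmf.emeasure_eq_measure divide_ennreal)
    also have "\<dots> \<le> ennreal \<eta>"
    proof (rule ennreal_leI)
      show "measure_pmf.prob D (A \<inter> {z. fst z = t}) / measure_pmf.prob D {z. fst z = t} \<le> \<eta>"
      proof -
        have f: "measure_pmf.prob D (A \<inter> {z. fst z = t}) \<le> \<eta> * measure_pmf.prob D {z. fst z = t}"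
          using fib t unfolding D3_def by blast
        then show ?thesis using pos by (simp add: divide_le_eq)
      qed
    qed
    finally show ?thesis .
  qed
  have "emeasure (measure_pmf D) A = (\<integral>\<^sup>+t. emeasure (measure_pmf (K t)) A \<partial>measure_pmf D3)"
    unfolding bind[symmetric] by simp
  also have "\<dots> \<le> (\<integral>\<^sup>+t. ennreal \<eta> \<partial>measure_pmf D3)"
    using Kb by (intro nn_integral_mono_AE) (simp add: AE_measure_pmf_iff)
  also have "\<dots> = ennreal \<eta>" by simp
  finally have "ennreal (measure_pmf.prob D A) \<le> ennreal \<eta>"
    by (simp add: measure_pmf.emeasure_eq_measure)
  then show ?thesis using e0 by simp
qed

definition thrB :: "nat \<Rightarrow> (nat \<Rightarrow> nat \<Rightarrow> real) \<Rightarrow> real \<Rightarrow> nat \<Rightarrow> nat list \<Rightarrow> nat list \<Rightarrow> real" where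
  "thrB L xi d n ms us = d/3 + sqrt ((d/3)^2 + 2*d*((\<Sum>k<n. cMU L (ms!k) (us!k) * (1 - cMU L (ms!k) (us!k))
        * (xi (ms!k) (us!k))^2) / n))"

definition badB :: "nat \<Rightarrow> (nat \<Rightarrow> nat \<Rightarrow> real) \<Rightarrow> real \<Rightarrow> nat \<Rightarrow> nat list \<Rightarrow> nat list \<Rightarrow> nat list set" where
  "badB L xi d n ms us = {xs \<in> binlists n.
     (\<Sum>k<n. (real (xs!k) - cMU L (ms!k) (us!k)) * xi (ms!k) (us!k)) > n * thrB L xi d n ms us}"

definition goodB :: "nat \<Rightarrow> (nat \<Rightarrow> nat \<Rightarrow> real) \<Rightarrow> nat \<Rightarrow> nat list \<Rightarrow> nat list \<Rightarrow> bool" where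
  "goodB L xi n ms us = (\<forall>k<n. 0 \<le> cMU L (ms!k) (us!k) \<and> cMU L (ms!k) (us!k) \<le> 1 \<and> \<bar>xi (ms!k) (us!k)\<bar> \<le> 1)"

lemma bad_bound:
  assumes "n \<ge> 1" "goodB L xi n ms us" "d \<ge> 0"
  shows "(\<Sum>xs\<in>badB L xi d n ms us. \<Prod>k<n. bern (cMU L (ms!k) (us!k)) (xs!k)) \<le> exp (- n * d)"
  using bernstein[of n "\<lambda>k. cMU L (ms!k) (us!k)" "\<lambda>k. xi (ms!k) (us!k)" d] assms
  unfolding badB_def thrB_def goodB_def by simp

lemma probA2:
  fixes \<Omega> :: "'a pmf" and NN :: "'a \<Rightarrow> nat" and m u x :: "'a \<Rightarrow> nat list"
    and xi :: "nat \<Rightarrow> nat \<Rightarrow> real" and \<delta>2 :: "nat \<Rightarrow> real" and \<eta>2 :: real and L :: nat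
  assumes hL: "L \<ge> 2"
    and seq_range: "\<forall>\<omega>\<in>set_pmf \<Omega>. NN \<omega> \<ge> 1 \<longrightarrow>
         length (m \<omega>) = NN \<omega> \<and> length (u \<omega>) = NN \<omega> \<and> length (x \<omega>) = NN \<omega> \<and>
         (\<forall>k < NN \<omega>. (m \<omega> ! k, u \<omega> ! k, x \<omega> ! k) \<in> W_set L)"
    and condC: "\<forall>n \<ge> 1. \<forall>ms us xs. length xs = n \<longrightarrow> set xs \<subseteq> {0, 1} \<longrightarrow>
         measure_pmf.prob \<Omega> {\<omega>. NN \<omega> = n \<and> m \<omega> = ms \<and> u \<omega> = us \<and> x \<omega> = xs}
           = measure_pmf.prob \<Omega> {\<omega>. NN \<omega> = n \<and> m \<omega> = ms \<and> u \<omega> = us}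
             * (\<Prod>k<n. (cMU L (ms ! k) (us ! k)) ^ (xs ! k)
                        * (1 - cMU L (ms ! k) (us ! k)) ^ (1 - xs ! k))"
    and xi_bound: "\<forall>M\<in>{0..L}. \<forall>U\<in>{0..1}. 0 \<le> cMU L M U \<and> cMU L M U \<le> 1 \<longrightarrow> \<bar>xi M U\<bar> \<le> 1"
    and h\<eta>2: "0 \<le> \<eta>2" and h\<delta>2: "\<forall>N. 0 \<le> \<delta>2 N"
    and max2: "\<forall>N \<ge> 1. exp (- real N * \<delta>2 N) \<le> \<eta>2"
  shows "measure_pmf.prob \<Omega> {\<omega>. NN \<omega> \<ge> 1 \<and> x \<omega> \<in> badB L xi (\<delta>2 (NN \<omega>)) (NN \<omega>) (m \<omega>) (u \<omega>)} \<le> \<eta>2"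
proof -
  define g where "g \<omega> = ((NN \<omega>, m \<omega>, u \<omega>), x \<omega>)" for \<omega>
  define D where "D = map_pmf g \<Omega>"
  define A' where "A' = {z :: (nat \<times> nat list \<times> nat list) \<times> nat list.
      fst (fst z) \<ge> 1 \<and> goodB L xi (fst (fst z)) (fst (snd (fst z))) (snd (snd (fst z))) \<and>
      snd z \<in> badB L xi (\<delta>2 (fst (fst z))) (fst (fst z)) (fst (snd (fst z))) (snd (snd (fst z)))}"
  let ?E = "{\<omega>. NN \<omega> \<ge> 1 \<and> x \<omega> \<in> badB L xi (\<delta>2 (NN \<omega>)) (NN \<omega>) (m \<omega>) (u \<omega>)}"
  have sub: "?E \<inter> set_pmf \<Omega> \<subseteq> g -` A'"
  proof
    fix \<omega> assume \<omega>: "\<omega> \<in> ?E \<inter> set_pmf \<Omega>"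
    then have n1: "NN \<omega> \<ge> 1" and bad: "x \<omega> \<in> badB L xi (\<delta>2 (NN \<omega>)) (NN \<omega>) (m \<omega>) (u \<omega>)" by auto
    have W: "\<forall>k < NN \<omega>. (m \<omega> ! k, u \<omega> ! k, x \<omega> ! k) \<in> W_set L" using seq_range \<omega> n1 by auto
    have "goodB L xi (NN \<omega>) (m \<omega>) (u \<omega>)"
      unfolding goodB_def
    proof (intro allI impI)
      fix k assume k: "k < NN \<omega>"
      have w: "(m \<omega> ! k, u \<omega> ! k, x \<omega> ! k) \<in> W_set L" using W k by auto
      have c: "0 \<le> cMU L (m \<omega> ! k) (u \<omega> ! k) \<and> cMU L (m \<omega> ! k) (u \<omega> ! k) \<le> 1"
        using cMU_W[OF hL w] by simp
      have "m \<omega> ! k \<in> {0..L}" "u \<omega> ! k \<in> {0..1}" using w by (auto simp: W_set_def)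
      then show "0 \<le> cMU L (m \<omega> ! k) (u \<omega> ! k) \<and> cMU L (m \<omega> ! k) (u \<omega> ! k) \<le> 1 \<and> \<bar>xi (m \<omega> ! k) (u \<omega> ! k)\<bar> \<le> 1"
        using c xi_bound by blast
    qed
    then show "\<omega> \<in> g -` A'" using n1 bad unfolding A'_def g_def by simp
  qed
  have "measure_pmf.prob \<Omega> ?E = measure_pmf.prob \<Omega> (?E \<inter> set_pmf \<Omega>)" by (simp add: measure_Int_set_pmf)
  also have "\<dots> \<le> measure_pmf.prob \<Omega> (g -` A')" using sub by (intro measure_pmf.finite_measure_mono) auto
  also have "\<dots> = measure_pmf.prob D A'" unfolding D_def by simp
  also have "\<dots> \<le> \<eta>2"
  proof (rule pmf_fiber_bound[OF h\<eta>2], intro ballI)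
    fix t assume "t \<in> set_pmf (map_pmf fst D)"
    obtain n ms us where t: "t = (n, ms, us)" by (cases t) auto
    define Pt where "Pt = measure_pmf.prob D {z. fst z = t}"
    have Pt0: "Pt \<ge> 0" unfolding Pt_def by simp
    show "measure_pmf.prob D (A' \<inter> {z. fst z = t}) \<le> \<eta>2 * measure_pmf.prob D {z. fst z = t}"
    proof (cases "n \<ge> 1 \<and> goodB L xi n ms us")
      case False
      then have "A' \<inter> {z. fst z = t} = {}" unfolding A'_def t by auto
      then show ?thesis using h\<eta>2 by simp
    next
      case True
      then have n1: "n \<ge> 1" and good: "goodB L xi n ms us" by auto
      have eqA: "A' \<inter> {z. fst z = t} = (\<lambda>xs. (t, xs)) ` badB L xi (\<delta>2 n) n ms us"
        unfolding A'_def t using True by auto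
      have finB: "finite (badB L xi (\<delta>2 n) n ms us)"
        by (rule finite_subset[OF _ finite_binlists[of n]]) (auto simp: badB_def)
      have Pt_eq: "Pt = measure_pmf.prob \<Omega> {\<omega>. NN \<omega> = n \<and> m \<omega> = ms \<and> u \<omega> = us}"
        unfolding Pt_def D_def t by (simp add: g_def vimage_def)
      have pmfD: "pmf D (t, xs) = Pt * (\<Prod>k<n. bern (cMU L (ms!k) (us!k)) (xs!k))"
        if xs: "xs \<in> badB L xi (\<delta>2 n) n ms us" for xs
      proof -
        have xb: "length xs = n" "set xs \<subseteq> {0,1}" using xs by (auto simp: badB_def binlists_def)
        have "pmf D (t, xs) = measure_pmf.prob \<Omega> {\<omega>. NN \<omega> = n \<and> m \<omega> = ms \<and> u \<omega> = us \<and> x \<omega> = xs}"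
          unfolding D_def pmf_map t by (simp add: g_def vimage_def)
        also have "\<dots> = Pt * (\<Prod>k<n. (cMU L (ms ! k) (us ! k)) ^ (xs ! k)
                        * (1 - cMU L (ms ! k) (us ! k)) ^ (1 - xs ! k))"
          using condC n1 xb Pt_eq by simp
        finally show ?thesis by (simp add: bern_def)
      qed
      have "measure_pmf.prob D (A' \<inter> {z. fst z = t}) = (\<Sum>z\<in>(\<lambda>xs. (t, xs)) ` badB L xi (\<delta>2 n) n ms us. pmf D z)"
        unfolding eqA by (rule measure_measure_pmf_finite) (use finB in simp)
      also have "\<dots> = (\<Sum>xs\<in>badB L xi (\<delta>2 n) n ms us. pmf D (t, xs))"
        by (subst sum.reindex) (auto simp: inj_on_def)
      also have "\<dots> = Pt * (\<Sum>xs\<in>badB L xi (\<delta>2 n) n ms us. \<Prod>k<n. bern (cMU L (ms!k) (us!k)) (xs!k))"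
        by (simp add: pmfD sum_distrib_left)
      also have "\<dots> \<le> Pt * exp (- n * \<delta>2 n)"
        using bad_bound[OF n1 good, of "\<delta>2 n"] h\<delta>2 Pt0 by (intro mult_left_mono) auto
      also have "\<dots> \<le> Pt * \<eta>2" using max2 n1 Pt0 by (intro mult_left_mono) auto
      finally show ?thesis unfolding Pt_def by (simp add: mult.commute)
    qed
  qed
  finally show ?thesis .
qed

lemma tp_Pset2_iff:
  assumes n1: "length xs \<ge> 1" and W: "\<forall>k<length xs. (ms!k, us!k, xs!k) \<in> W_set L"
  shows "tp ms us xs \<in> Pset2 L xi d \<longleftrightarrow>
    (\<Sum>k<length xs. (real (xs!k) - cMU L (ms!k) (us!k)) * xi (ms!k) (us!k)) / length xs
      \<le> thrB L xi d (length xs) ms us"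
proof -
  have pm: "is_pmf_on (W_set L) (tp ms us xs)" by (rule tp_pmf[OF n1 W])
  have l: "(\<Sum>w\<in>W_set L. case w of (M, U, X) \<Rightarrow> tp ms us xs w * ((real X - cMU L M U) * xi M U))
      = (\<Sum>k<length xs. (real (xs!k) - cMU L (ms!k) (us!k)) * xi (ms!k) (us!k)) / length xs"
    unfolding Pset2_lhs tp_sum[OF W] by simp
  have r: "(\<Sum>(M, U)\<in>{0..L} \<times> {0..1}. marg_MU L (tp ms us xs) M U * (cMU L M U * (1 - cMU L M U) * (xi M U)\<^sup>2))
      = (\<Sum>k<length xs. cMU L (ms!k) (us!k) * (1 - cMU L (ms!k) (us!k)) * (xi (ms!k) (us!k))^2) / length xs"
    unfolding marg_MU_sum tp_sum[OF W] by simp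
  show ?thesis unfolding Pset2_def mem_Collect_eq l r thrB_def using pm by simp
qed

lemma tp_Pset1_iff:
  assumes n1: "length xs \<ge> 1" and W: "\<forall>k<length xs. (ms!k, us!k, xs!k) \<in> W_set L"
  shows "tp ms us xs \<in> Pset1 L Nem psrc N nu \<delta>1 \<longleftrightarrow>
    (\<Sum>k<length xs. nu (ms!k)) / length xs
      \<le> real Nem / real N * ((\<Sum>M\<in>{0..L}. binom_pmf L psrc M * nu M) + \<delta>1)"
proof -
  have pm: "is_pmf_on (W_set L) (tp ms us xs)" by (rule tp_pmf[OF n1 W])
  have l: "(\<Sum>M\<in>{0..L}. marg_M L (tp ms us xs) M * nu M) = (\<Sum>k<length xs. nu (ms!k)) / length xs"
    unfolding marg_M_sum tp_sum[OF W] by simp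
  show ?thesis unfolding Pset1_def mem_Collect_eq l using pm by simp
qed

theorem theorem1:
  fixes L Nem :: nat and psrc :: real
    and \<Omega> :: "'a pmf"
    and v :: "'a \<Rightarrow> nat \<Rightarrow> nat" and NN :: "'a \<Rightarrow> nat"
    and m u x :: "'a \<Rightarrow> nat list"
    and nu :: "nat \<Rightarrow> real" and xi :: "nat \<Rightarrow> nat \<Rightarrow> real"
    and \<eta>1 \<delta>1 \<eta>2 :: real and \<delta>2 :: "nat \<Rightarrow> real" and HPA :: "nat \<Rightarrow> real"
  assumes hL: "L \<ge> 2" and hNem: "Nem \<ge> 1" and hp: "0 \<le> psrc" "psrc \<le> 1"
    \<comment> \<open>ranges of the random variables\<close>
    and v_range: "\<forall>\<omega>\<in>set_pmf \<Omega>. (\<Sum>M\<in>{0..L}. v \<omega> M) = Nem"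
    and seq_range: "\<forall>\<omega>\<in>set_pmf \<Omega>. NN \<omega> \<ge> 1 \<longrightarrow>
         length (m \<omega>) = NN \<omega> \<and> length (u \<omega>) = NN \<omega> \<and> length (x \<omega>) = NN \<omega> \<and>
         (\<forall>k < NN \<omega>. (m \<omega> ! k, u \<omega> ! k, x \<omega> ! k) \<in> W_set L)"
    \<comment> \<open>(A)\<close>
    and condA: "\<exists>podd \<le> psrc. \<forall>w :: nat \<Rightarrow> nat. (\<Sum>M\<in>{0..L}. w M) = Nem \<longrightarrow>
         measure_pmf.prob \<Omega> {\<omega>. \<forall>M\<in>{0..L}. v \<omega> M = w M}
           = fact Nem / (\<Prod>M\<in>{0..L}. fact (w M))
             * (\<Prod>M\<in>{0..L}. (binom_pmf L podd M) ^ (w M))"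
    \<comment> \<open>(B)\<close>
    and condB: "\<forall>M\<in>{0..L}. \<forall>\<omega>\<in>set_pmf \<Omega>. NN \<omega> \<ge> 1 \<longrightarrow> occ (m \<omega>) M \<le> v \<omega> M"
    \<comment> \<open>(C)\<close>
    and condC: "\<forall>n \<ge> 1. \<forall>ms us xs. length xs = n \<longrightarrow> set xs \<subseteq> {0, 1} \<longrightarrow>
         measure_pmf.prob \<Omega> {\<omega>. NN \<omega> = n \<and> m \<omega> = ms \<and> u \<omega> = us \<and> x \<omega> = xs}
           = measure_pmf.prob \<Omega> {\<omega>. NN \<omega> = n \<and> m \<omega> = ms \<and> u \<omega> = us}
             * (\<Prod>k<n. (cMU L (ms ! k) (us ! k)) ^ (xs ! k)
                        * (1 - cMU L (ms ! k) (us ! k)) ^ (1 - xs ! k))"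
    \<comment> \<open>nu\<close>
    and nu_nonneg: "\<forall>M\<in>{0..L}. 0 \<le> nu M"
    and nu_zero: "\<forall>M\<in>{0..L}. real M < real L * psrc \<longrightarrow> nu M = 0"
    \<comment> \<open>xi\<close>
    and xi_bound: "\<forall>M\<in>{0..L}. \<forall>U\<in>{0..1}. 0 \<le> cMU L M U \<and> cMU L M U \<le> 1 \<longrightarrow> \<bar>xi M U\<bar> \<le> 1"
    \<comment> \<open>eta1, delta1\<close>
    and h\<eta>1: "0 \<le> \<eta>1" and h\<delta>1: "0 \<le> \<delta>1"
    and max1: "\<forall>Q. is_pmf_on {0..L} Q \<longrightarrow>
         (\<Sum>M\<in>{0..L}. Q M * nu M) \<ge> (\<Sum>M\<in>{0..L}. binom_pmf L psrc M * nu M) + \<delta>1 \<longrightarrow>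
         (\<forall>M\<in>{0..L}. binom_pmf L psrc M = 0 \<longrightarrow> Q M = 0) \<longrightarrow>
         2 powr (- real Nem * KL2 L Q (binom_pmf L psrc)) \<le> \<eta>1"
    \<comment> \<open>eta2, delta2\<close>
    and h\<eta>2: "0 \<le> \<eta>2" and h\<delta>2: "\<forall>N. 0 \<le> \<delta>2 N"
    and max2: "\<forall>N \<ge> 1. exp (- real N * \<delta>2 N) \<le> \<eta>2"
    \<comment> \<open>H_PA\<close>
    and hHPA: "\<forall>N \<ge> 1. \<forall>P \<in> Pset1 L Nem psrc N nu \<delta>1 \<inter> Pset2 L xi (\<delta>2 N).
         cond_entropy_XY L P \<le> HPA N"
  shows "\<exists>T :: nat \<Rightarrow> (nat \<times> nat) list \<Rightarrow> nat list set.
           (\<forall>N \<ge> 1. \<forall>ys. length ys = N \<and> set ys \<subseteq> Y_set L \<longrightarrow>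
               T N ys \<subseteq> {xs. length xs = N \<and> set xs \<subseteq> {0, 1}} \<and>
               (T N ys = {} \<or> log 2 (real (card (T N ys))) \<le> real N * HPA N)) \<and>
           measure_pmf.prob \<Omega>
             {\<omega>. NN \<omega> \<ge> 1 \<and> x \<omega> \<notin> T (NN \<omega>) (yseq (m \<omega>) (u \<omega>) (x \<omega>))}
             \<le> \<eta>1 + \<eta>2"
proof -
  define T where "T N ys = {xs \<in> binlists N. \<exists>ms us. length ms = N \<and> length us = N \<and>
      (\<forall>k<N. (ms!k, us!k, xs!k) \<in> W_set L) \<and> yseq ms us xs = ys \<and>
      tp ms us xs \<in> Pset1 L Nem psrc N nu \<delta>1 \<inter> Pset2 L xi (\<delta>2 N)}" for N ys
  have part1: "\<forall>N \<ge> 1. \<forall>ys. length ys = N \<and> set ys \<subseteq> Y_set L \<longrightarrow>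
               T N ys \<subseteq> {xs. length xs = N \<and> set xs \<subseteq> {0, 1}} \<and>
               (T N ys = {} \<or> log 2 (real (card (T N ys))) \<le> real N * HPA N)"
  proof (intro allI impI conjI)
    fix N :: nat and ys assume N1: "N \<ge> 1"
    show "T N ys \<subseteq> {xs. length xs = N \<and> set xs \<subseteq> {0, 1}}" unfolding T_def binlists_def by auto
    show "T N ys = {} \<or> log 2 (real (card (T N ys))) \<le> real N * HPA N"
    proof (cases "T N ys = {}")
      case True then show ?thesis by simp
    next
      case False
      define Qw where "Qw xs p = (length (fst p) = N \<and> length (snd p) = N \<and>
         (\<forall>k<N. (fst p!k, snd p!k, xs!k) \<in> W_set L) \<and> yseq (fst p) (snd p) xs = ys \<and>
         tp (fst p) (snd p) xs \<in> Pset1 L Nem psrc N nu \<delta>1 \<inter> Pset2 L xi (\<delta>2 N))" for xs p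
      define wit where "wit xs = (SOME p. Qw xs p)" for xs
      have wq: "Qw xs (wit xs)" if "xs \<in> T N ys" for xs
      proof -
        have "\<exists>p. Qw xs p" using that unfolding T_def Qw_def by auto
        then show ?thesis unfolding wit_def by (rule someI_ex)
      qed
      define MS where "MS xs = fst (wit xs)" for xs
      define US where "US xs = snd (wit xs)" for xs
      have TB: "T N ys \<subseteq> binlists N" unfolding T_def by auto
      have finT: "finite (T N ys)" using finite_subset[OF TB finite_binlists] .
      have wit': "\<forall>xs\<in>T N ys. length (MS xs) = N \<and> length (US xs) = N \<and>
                 (\<forall>k<N. (MS xs!k, US xs!k, xs!k) \<in> W_set L) \<and> yseq (MS xs) (US xs) xs = ys"
        using wq unfolding Qw_def MS_def US_def by blast
      have cb: "log 2 (card (T N ys)) \<le> N * cond_entropy_XY L (avgP (T N ys) (\<lambda>xs. tp (MS xs) (US xs) xs))"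
        by (rule count_bound[OF hL N1 TB False wit'])
      have inP: "\<forall>xs\<in>T N ys. tp (MS xs) (US xs) xs \<in> Pset1 L Nem psrc N nu \<delta>1 \<inter> Pset2 L xi (\<delta>2 N)"
        using wq unfolding Qw_def MS_def US_def by blast
      have a1: "avgP (T N ys) (\<lambda>xs. tp (MS xs) (US xs) xs) \<in> Pset1 L Nem psrc N nu \<delta>1"
        using inP by (intro avg_Pset1[OF finT False]) auto
      have a2: "avgP (T N ys) (\<lambda>xs. tp (MS xs) (US xs) xs) \<in> Pset2 L xi (\<delta>2 N)"
        using inP h\<delta>2 by (intro avg_Pset2[OF hL finT False]) auto
      have "cond_entropy_XY L (avgP (T N ys) (\<lambda>xs. tp (MS xs) (US xs) xs)) \<le> HPA N"
        using hHPA N1 a1 a2 by blast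
      then have "N * cond_entropy_XY L (avgP (T N ys) (\<lambda>xs. tp (MS xs) (US xs) xs)) \<le> N * HPA N"
        by (intro mult_left_mono) auto
      then show ?thesis using cb by simp
    qed
  qed
  define E1 where "E1 = {\<omega>. real Nem * ((\<Sum>M\<in>{0..L}. binom_pmf L psrc M * nu M) + \<delta>1)
            < (\<Sum>M\<in>{0..L}. real (v \<omega> M) * nu M)}"
  define E2 where "E2 = {\<omega>. NN \<omega> \<ge> 1 \<and> x \<omega> \<in> badB L xi (\<delta>2 (NN \<omega>)) (NN \<omega>) (m \<omega>) (u \<omega>)}"
  define Ev where "Ev = {\<omega>. NN \<omega> \<ge> 1 \<and> x \<omega> \<notin> T (NN \<omega>) (yseq (m \<omega>) (u \<omega>) (x \<omega>))}"
  have sub: "Ev \<inter> set_pmf \<Omega> \<subseteq> E1 \<union> E2"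
  proof
    fix \<omega> assume \<omega>: "\<omega> \<in> Ev \<inter> set_pmf \<Omega>"
    define n where "n = NN \<omega>"
    have n1: "n \<ge> 1" and notT: "x \<omega> \<notin> T n (yseq (m \<omega>) (u \<omega>) (x \<omega>))"
      using \<omega> unfolding Ev_def n_def by auto
    have len: "length (m \<omega>) = n" "length (u \<omega>) = n" "length (x \<omega>) = n"
      and W: "\<forall>k<n. (m \<omega> ! k, u \<omega> ! k, x \<omega> ! k) \<in> W_set L"
      using seq_range \<omega> n1 unfolding n_def by auto
    have xb: "x \<omega> \<in> binlists n"
    proof -
      have "set (x \<omega>) \<subseteq> {0,1}"
      proof
        fix a assume "a \<in> set (x \<omega>)"
        then obtain k where k: "k < n" "a = x \<omega> ! k" using len by (auto simp: in_set_conv_nth)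
        then show "a \<in> {0,1}" using W by (auto simp: W_set_def)
      qed
      then show ?thesis using len by (simp add: binlists_def)
    qed
    have W': "\<forall>k<length (x \<omega>). (m \<omega> ! k, u \<omega> ! k, x \<omega> ! k) \<in> W_set L" using W len by simp
    have l1: "length (x \<omega>) \<ge> 1" using len n1 by simp
    have notP: "tp (m \<omega>) (u \<omega>) (x \<omega>) \<notin> Pset1 L Nem psrc n nu \<delta>1 \<inter> Pset2 L xi (\<delta>2 n)"
      using notT xb len W unfolding T_def by auto
    show "\<omega> \<in> E1 \<union> E2"
    proof (cases "tp (m \<omega>) (u \<omega>) (x \<omega>) \<in> Pset1 L Nem psrc n nu \<delta>1")
      case False
      then have gt: "(\<Sum>k<n. nu (m \<omega> ! k)) / n > real Nem / real n * ((\<Sum>M\<in>{0..L}. binom_pmf L psrc M * nu M) + \<delta>1)"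
        using tp_Pset1_iff[OF l1 W'] len by (simp add: not_le)
      have mk: "\<forall>k<n. m \<omega> ! k \<in> {0..L}" using W by (auto simp: W_set_def)
      have "(\<Sum>k<n. nu (m \<omega> ! k)) = (\<Sum>M\<in>{0..L}. real (card {k. k < n \<and> m \<omega> ! k = M}) * nu M)"
        using sum_count[of "{0..L}" n "\<lambda>k. m \<omega> ! k" nu] mk by simp
      also have "\<dots> \<le> (\<Sum>M\<in>{0..L}. real (v \<omega> M) * nu M)"
      proof (intro sum_mono mult_right_mono)
        fix M assume M: "M \<in> {0..L}"
        have "card {k. k < n \<and> m \<omega> ! k = M} = occ (m \<omega>) M"
          unfolding occ_def length_filter_conv_card len by simp
        also have "\<dots> \<le> v \<omega> M" using condB M \<omega> n1 unfolding n_def by auto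
        finally show "real (card {k. k < n \<and> m \<omega> ! k = M}) \<le> real (v \<omega> M)" by simp
        show "0 \<le> nu M" using nu_nonneg M by auto
      qed
      finally have "(\<Sum>k<n. nu (m \<omega> ! k)) \<le> (\<Sum>M\<in>{0..L}. real (v \<omega> M) * nu M)" .
      then have "real Nem / real n * ((\<Sum>M\<in>{0..L}. binom_pmf L psrc M * nu M) + \<delta>1)
          < (\<Sum>M\<in>{0..L}. real (v \<omega> M) * nu M) / n"
        using gt n1 by (smt (verit) divide_right_mono of_nat_0_le_iff)
      then have "(real Nem * ((\<Sum>M\<in>{0..L}. binom_pmf L psrc M * nu M) + \<delta>1)) / real n
          < (\<Sum>M\<in>{0..L}. real (v \<omega> M) * nu M) / real n" by simp
      then have "real Nem * ((\<Sum>M\<in>{0..L}. binom_pmf L psrc M * nu M) + \<delta>1)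
          < (\<Sum>M\<in>{0..L}. real (v \<omega> M) * nu M)"
        using n1 by (simp add: divide_less_cancel)
      then show ?thesis unfolding E1_def by simp
    next
      case True
      then have "tp (m \<omega>) (u \<omega>) (x \<omega>) \<notin> Pset2 L xi (\<delta>2 n)" using notP by simp
      then have gt: "(\<Sum>k<n. (real (x \<omega> ! k) - cMU L (m \<omega> ! k) (u \<omega> ! k)) * xi (m \<omega> ! k) (u \<omega> ! k)) / n
           > thrB L xi (\<delta>2 n) n (m \<omega>) (u \<omega>)"
        using tp_Pset2_iff[OF l1 W'] len by (simp add: not_le)
      then have "(\<Sum>k<n. (real (x \<omega> ! k) - cMU L (m \<omega> ! k) (u \<omega> ! k)) * xi (m \<omega> ! k) (u \<omega> ! k))
           > n * thrB L xi (\<delta>2 n) n (m \<omega>) (u \<omega>)"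
        using n1 by (simp add: field_simps)
      then have "x \<omega> \<in> badB L xi (\<delta>2 n) n (m \<omega>) (u \<omega>)" using xb unfolding badB_def by simp
      then show ?thesis unfolding E2_def n_def using n1 unfolding n_def by simp
    qed
  qed
  have p1: "measure_pmf.prob \<Omega> E1 \<le> \<eta>1"
    unfolding E1_def
    by (rule probA1[OF hL hNem hp v_range condA nu_nonneg nu_zero h\<eta>1 h\<delta>1 max1])
  have p2: "measure_pmf.prob \<Omega> E2 \<le> \<eta>2"
    unfolding E2_def
    by (rule probA2[OF hL seq_range condC xi_bound h\<eta>2 h\<delta>2 max2])
  have "measure_pmf.prob \<Omega> Ev = measure_pmf.prob \<Omega> (Ev \<inter> set_pmf \<Omega>)" by (simp add: measure_Int_set_pmf)
  also have "\<dots> \<le> measure_pmf.prob \<Omega> (E1 \<union> E2)" using sub by (intro measure_pmf.finite_measure_mono) auto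
  also have "\<dots> \<le> measure_pmf.prob \<Omega> E1 + measure_pmf.prob \<Omega> E2"
    by (rule measure_Un_le) auto
  also have "\<dots> \<le> \<eta>1 + \<eta>2" using p1 p2 by simp
  finally have "measure_pmf.prob \<Omega> Ev \<le> \<eta>1 + \<eta>2" .
  then show ?thesis using part1 unfolding Ev_def by blast
qed

end
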